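(* Assume the standing conventions of the context, and suppose $\mathcal D_{Z,Z'}\neq\emptyset$. Then: (i) there is a set $\Psi'_0$ of pairwise disjoint consecutive pairs in $Z'_{\mathrm I}$ such that $D_Z=\{\Lambda_{\Psi'}\mid \Psi'\le\Psi'_0\}$; (ii) there is a set $\Psi_0$ of pairwise disjoint consecutive pairs in $Z_{\mathrm I}$ such that $D_{Z'}=\{\Lambda_{\Psi}\mid \Psi\le\Psi_0\}$. (In fact $\Psi'_0$ may be taken to be the union of all consecutive pairs $\Psi'$ in $Z'_{\mathrm I}$ with $(Z,\Lambda_{\Psi'})\in\mathcal D_{Z,Z'}$, and $\Psi_0$ the union of all consecutive pairs $\Psi$ in $Z_{\mathrm I}$ with $(\Lambda_\Psi,Z')\in\mathcal D_{Z,Z'}$.)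
   Context: A symbol is an array $\Lambda=\binom{a'_1,\ldots,a'_{m_1}}{b'_1,\ldots,b'_{m_2}}$ of two strictly decreasing finite sequences of nonnegative integers (top row, bottom row); its defect is $\mathrm{def}(\Lambda)=m_1-m_2$. Standing assumptions: $Z=\binom{a_1,\ldots,a_{m+1}}{b_1,\ldots,b_m}$ is a special symbol of defect $1$, i.e. $a_1\ge b_1\ge a_2\ge b_2\ge\cdots\ge b_m\ge a_{m+1}$; $Z'=\binom{c_1,\ldots,c_{m'}}{d_1,\ldots,d_{m'}}$ is a special symbol of defect $0$, i.e. $c_1\ge d_1\ge c_2\ge d_2\ge\cdots\ge c_{m'}\ge d_{m'}$; and $m'\in\{m,m+1\}$. For a symbol $Y$, $Y_{\mathrm I}$ is the set of entries of $Y$ occurring in exactly one row. For $M\subset Z_{\mathrm I}$, $\Lambda_M$ is the symbol obtained from $Z$ by moving every entry of $M$ to the other row (rows re-sorted decreasingly); for $N\subset Z'_{\mathrm I}$, $\Lambda_N$ is obtained from $Z'$ in the same way. $\overline{\mathcal S}_Z=\{\Lambda_M: M\subset Z_{\mathrm I}\}$, $\overline{\mathcal S}_{Z'}=\{\Lambda_N:N\subset Z'_{\mathrm I}\}$; $\mathcal S_{Z,1}$ (resp. $\mathcal S_{Z',0}$) is the set of elements of $\overline{\mathcal S}_Z$ of defect $1$ (resp. of $\overline{\mathcal S}_{Z'}$ of defect $0$). A consecutive pair in $Z'_{\mathrm I}$ is a two-element subset $\{c_k,d_l\}\subset Z'_{\mathrm I}$, written $\binom{c_k}{d_l}$, with $l\in\{k-1,k\}$;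 a consecutive pair in $Z_{\mathrm I}$ is $\{a_k,b_l\}\subset Z_{\mathrm I}$, written $\binom{a_k}{b_l}$, with $l\in\{k-1,k\}$. For a set $\Psi_0$ of pairwise disjoint consecutive pairs, viewed also as the subset given by the union of its pairs, $\Psi\le\Psi_0$ means that $\Psi$ is the union of some (possibly none) of the pairs in $\Psi_0$. Relation $\overline{\mathcal B}^+_{Z,Z'}\subset\overline{\mathcal S}_Z\times\overline{\mathcal S}_{Z'}$: for $\Lambda=\binom{a'_1,\ldots,a'_{m_1}}{b'_1,\ldots,b'_{m_2}}\in\overline{\mathcal S}_Z$ and $\Lambda'=\binom{c'_1,\ldots,c'_{m'_1}}{d'_1,\ldots,d'_{m'_2}}\in\overline{\mathcal S}_{Z'}$, $(\Lambda,\Lambda')\in\overline{\mathcal B}^+_{Z,Z'}$ iff $\mathrm{def}(\Lambda')=1-\mathrm{def}(\Lambda)$ and: if $m'=m$, $a'_i>d'_i\ge a'_{i+1}$ for $1\le i\le m'_2$ and $b'_{i-1}>c'_i\ge b'_i$ for $1\le i\le m'_1$; if $m'=m+1$, $a'_i\ge d'_i>a'_{i+1}$ for $1\le i\le m'_2$ and $b'_{i-1}\ge c'_i>b'_i$ for $1\le i\le m'_1$; here $b'_0=+\infty$ and nonexistent entries $a'_j,b'_j$ beyond the row lengths are $-\infty$. Then $\mathcal D_{Z,Z'}=\overline{\mathcal B}^+_{Z,Z'}\cap(\mathcal S_{Z,1}\times\mathcal S_{Z',0})$, $D_Z=\{\Lambda'\mid (Z,\Lambda')\in\mathcal D_{Z,Z'}\}$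 and $D_{Z'}=\{\Lambda\mid(\Lambda,Z')\in\mathcal D_{Z,Z'}\}$. *)

theory Defs
  imports Main "HOL-Library.Extended_Real"
begin

text \<open>A symbol is a pair (top row, bottom row) of finite sets of naturals;
  a strictly decreasing finite sequence is identified with its set of entries.\<close>
type_synonym symbol = "nat set \<times> nat set"

definition nth_dec :: "nat set \<Rightarrow> nat \<Rightarrow> nat" where
  "nth_dec A i = rev (sorted_list_of_set A) ! (i - 1)"

definition ent :: "nat set \<Rightarrow> nat \<Rightarrow> ereal" where
  "ent A i = (if 1 \<le> i \<and> i \<le> card A then ereal (real (nth_dec A i)) else MInfty)"

definition is_symbol :: "symbol \<Rightarrow> bool" where
  "is_symbol Y \<longleftrightarrow> finite (fst Y) \<and> finite (snd Y)"

definition defect :: "symbol \<Rightarrow> int" where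
  "defect Y = int (card (fst Y)) - int (card (snd Y))"

definition special1 :: "nat \<Rightarrow> symbol \<Rightarrow> bool" where
  "special1 m Z \<longleftrightarrow> is_symbol Z \<and> card (fst Z) = m + 1 \<and> card (snd Z) = m \<and>
     (\<forall>i. 1 \<le> i \<and> i \<le> m \<longrightarrow>
        nth_dec (fst Z) i \<ge> nth_dec (snd Z) i \<and> nth_dec (snd Z) i \<ge> nth_dec (fst Z) (i + 1))"

definition special0 :: "nat \<Rightarrow> symbol \<Rightarrow> bool" where
  "special0 m' Z' \<longleftrightarrow> is_symbol Z' \<and> card (fst Z') = m' \<and> card (snd Z') = m' \<and>
     (\<forall>i. 1 \<le> i \<and> i \<le> m' \<longrightarrow> nth_dec (fst Z') i \<ge> nth_dec (snd Z') i) \<and>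
     (\<forall>i. 1 \<le> i \<and> i < m' \<longrightarrow> nth_dec (snd Z') i \<ge> nth_dec (fst Z') (i + 1))"

definition singles :: "symbol \<Rightarrow> nat set" where
  "singles Y = (fst Y - snd Y) \<union> (snd Y - fst Y)"

definition move :: "symbol \<Rightarrow> nat set \<Rightarrow> symbol" where
  "move Y M = ((fst Y - M) \<union> (snd Y \<inter> M), (snd Y - M) \<union> (fst Y \<inter> M))"

definition Sbar :: "symbol \<Rightarrow> symbol set" where
  "Sbar Y = {move Y M | M. M \<subseteq> singles Y}"

definition Sdef :: "symbol \<Rightarrow> int \<Rightarrow> symbol set" where
  "Sdef Y d = {L \<in> Sbar Y. defect L = d}"

definition consec_pair :: "symbol \<Rightarrow> nat set \<Rightarrow> bool" where
  "consec_pair Y P \<longleftrightarrow> (\<exists>k l. 1 \<le> k \<and> k \<le> card (fst Y) \<and> 1 \<le> l \<and> l \<le> card (snd Y) \<and>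
      (l = k \<or> l + 1 = k) \<and> P = {nth_dec (fst Y) k, nth_dec (snd Y) l} \<and> P \<subseteq> singles Y)"

definition Bplus :: "symbol \<Rightarrow> symbol \<Rightarrow> (symbol \<times> symbol) set" where
  "Bplus Z Z' = {(L, L'). L \<in> Sbar Z \<and> L' \<in> Sbar Z' \<and> defect L' = 1 - defect L \<and>
     (let m = card (snd Z); m' = card (fst Z');
          A = fst L; B = snd L; C = fst L'; D = snd L';
          bprev = (\<lambda>i. if i = 1 then PInfty else ent B (i - 1)) in
      (m' = m \<longrightarrow>
         (\<forall>i. 1 \<le> i \<and> i \<le> card D \<longrightarrow> ent A i > ent D i \<and> ent D i \<ge> ent A (i + 1)) \<and>
         (\<forall>i. 1 \<le> i \<and> i \<le> card C \<longrightarrow> bprev i > ent C i \<and> ent C i \<ge> ent B i)) \<and>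
      (m' = m + 1 \<longrightarrow>
         (\<forall>i. 1 \<le> i \<and> i \<le> card D \<longrightarrow> ent A i \<ge> ent D i \<and> ent D i > ent A (i + 1)) \<and>
         (\<forall>i. 1 \<le> i \<and> i \<le> card C \<longrightarrow> bprev i \<ge> ent C i \<and> ent C i > ent B i)))}"

definition DZZ :: "symbol \<Rightarrow> symbol \<Rightarrow> (symbol \<times> symbol) set" where
  "DZZ Z Z' = Bplus Z Z' \<inter> (Sdef Z 1 \<times> Sdef Z' 0)"

end

theory Submission
  imports Defs "HOL-Library.Extended_Real"
begin


definition cnt :: "nat set \<Rightarrow> nat \<Rightarrow> nat" where
  "cnt X t = card {x\<in>X. t \<le> x}"

lemma nth_dec_props:
  assumes fin: "finite X" and j: "1 \<le> j" "j \<le> card X"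
  shows "nth_dec X j \<in> X \<and> cnt X (nth_dec X j) = j"
proof -
  define xs where "xs = rev (sorted_list_of_set X)"
  have len: "length xs = card X" and setx: "set xs = X" and dist: "distinct xs"
    using fin by (auto simp: xs_def)
  have ss: "sorted_wrt (<) (sorted_list_of_set X)" by (simp add: strict_sorted_iff)
  have sw: "sorted_wrt (>) xs"
    using ss by (simp add: xs_def sorted_wrt_rev)
  have nd: "nth_dec X j = xs ! (j-1)" by (simp add: nth_dec_def xs_def)
  have lt: "j - 1 < length xs" using j len by simp
  have mem: "nth_dec X j \<in> X" using nd lt setx nth_mem by metis
  have ord: "\<And>a b. a < length xs \<Longrightarrow> b < length xs \<Longrightarrow> (xs!a \<le> xs!b \<longleftrightarrow> b \<le> a)"
  proof -
    fix a b assume a: "a < length xs" and b: "b < length xs"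
    show "(xs!a \<le> xs!b \<longleftrightarrow> b \<le> a)"
    proof (cases "a = b")
      case False
      then consider "a < b" | "b < a" by linarith
      then show ?thesis
      proof cases
        case 1 then have "xs!a > xs!b" using sorted_wrt_nth_less[OF sw 1 b] by simp
        then show ?thesis using 1 by simp
      next
        case 2 then have "xs!b > xs!a" using sorted_wrt_nth_less[OF sw 2 a] by simp
        then show ?thesis using 2 by simp
      qed
    qed simp
  qed
  have eq: "{x\<in>X. nth_dec X j \<le> x} = (\<lambda>i. xs!i) ` {..<j}"
  proof
    show "{x\<in>X. nth_dec X j \<le> x} \<subseteq> (\<lambda>i. xs!i) ` {..<j}"
    proof
      fix x assume "x \<in> {x\<in>X. nth_dec X j \<le> x}"
      then have x: "x \<in> set xs" "xs!(j-1) \<le> x" using setx nd by auto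
      then obtain i where i: "i < length xs" "x = xs!i" by (metis in_set_conv_nth)
      then have "i \<le> j - 1" using ord[OF lt i(1)] x by simp
      then show "x \<in> (\<lambda>i. xs!i) ` {..<j}" using i j by force
    qed
    show "(\<lambda>i. xs!i) ` {..<j} \<subseteq> {x\<in>X. nth_dec X j \<le> x}"
    proof
      fix x assume "x \<in> (\<lambda>i. xs!i) ` {..<j}"
      then obtain i where i: "i < j" "x = xs!i" by auto
      have il: "i < length xs" using i lt by linarith
      have "xs!(j-1) \<le> xs!i" using ord[OF lt il] i by simp
      then show "x \<in> {x\<in>X. nth_dec X j \<le> x}" using i il setx nd nth_mem by auto
    qed
  qed
  have inj: "inj_on (\<lambda>i. xs!i) {..<j}"
    using dist lt by (auto simp: inj_on_def nth_eq_iff_index_eq)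
  have "card ((\<lambda>i. xs!i) ` {..<j}) = j" using card_image[OF inj] by (metis card_lessThan)
  then have "cnt X (nth_dec X j) = j" unfolding cnt_def eq .
  with mem show ?thesis by blast
qed

lemma cnt_le_card: "finite X \<Longrightarrow> cnt X t \<le> card X"
  unfolding cnt_def by (intro card_mono) auto

lemma cnt_zero[simp]: "cnt X 0 = card X"
  unfolding cnt_def by simp

lemma cnt_mono: "finite X \<Longrightarrow> s \<le> t \<Longrightarrow> cnt X t \<le> cnt X s"
  unfolding cnt_def by (intro card_mono) auto

lemma cnt_Suc: "finite X \<Longrightarrow> cnt X t = cnt X (Suc t) + (if t \<in> X then 1 else 0)"
proof -
  assume f: "finite X"
  show ?thesis
  proof (cases "t \<in> X")
    case True
    have e: "{x\<in>X. t \<le> x} = insert t {x\<in>X. Suc t \<le> x}" using True by (auto simp: le_less)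
    have "t \<notin> {x\<in>X. Suc t \<le> x}" by simp
    then have "card (insert t {x\<in>X. Suc t \<le> x}) = Suc (card {x\<in>X. Suc t \<le> x})"
      using f by (intro card_insert_disjoint) auto
    then show ?thesis using True unfolding cnt_def e by simp
  next
    case False
    have e: "{x\<in>X. t \<le> x} = {x\<in>X. Suc t \<le> x}" using False by (auto simp: le_less)
    show ?thesis using False unfolding cnt_def e by simp
  qed
qed

lemma cnt_split: "finite X \<Longrightarrow> a \<le> b \<Longrightarrow> cnt X a = cnt X b + card {z\<in>X. a \<le> z \<and> z < b}"
proof -
  assume f: "finite X" and ab: "a \<le> b"
  have "{x\<in>X. a \<le> x} = {x\<in>X. b \<le> x} \<union> {z\<in>X. a \<le> z \<and> z < b}" using ab by auto
  moreover have "{x\<in>X. b \<le> x} \<inter> {z\<in>X. a \<le> z \<and> z < b} = {}" by auto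
  ultimately show ?thesis unfolding cnt_def using f by (simp add: card_Un_disjoint)
qed

lemma KF:
  assumes fin: "finite X" and j: "1 \<le> j"
  shows "j \<le> cnt X t \<longleftrightarrow> j \<le> card X \<and> t \<le> nth_dec X j"
proof
  assume h: "j \<le> cnt X t"
  have jc: "j \<le> card X" using h cnt_le_card[OF fin, of t] by linarith
  have P: "nth_dec X j \<in> X" "cnt X (nth_dec X j) = j" using nth_dec_props[OF fin j jc] by auto
  show "j \<le> card X \<and> t \<le> nth_dec X j"
  proof (rule ccontr)
    assume "\<not> (j \<le> card X \<and> t \<le> nth_dec X j)"
    then have lt: "nth_dec X j < t" using jc by simp
    have "cnt X t \<le> cnt X (Suc (nth_dec X j))" using cnt_mono[OF fin, of "Suc (nth_dec X j)" t] lt by simp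
    moreover have "cnt X (nth_dec X j) = cnt X (Suc (nth_dec X j)) + 1" using cnt_Suc[OF fin, of "nth_dec X j"] P by simp
    ultimately show False using h P by linarith
  qed
next
  assume h: "j \<le> card X \<and> t \<le> nth_dec X j"
  then have "cnt X (nth_dec X j) = j" using nth_dec_props[OF fin j] by auto
  moreover have "cnt X (nth_dec X j) \<le> cnt X t" using cnt_mono[OF fin] h by simp
  ultimately show "j \<le> cnt X t" by simp
qed

lemma nth_dec_cnt:
  assumes fin: "finite X" and x: "x \<in> X"
  shows "1 \<le> cnt X x \<and> cnt X x \<le> card X \<and> nth_dec X (cnt X x) = x"
proof -
  have c1: "cnt X x = cnt X (Suc x) + 1" using cnt_Suc[OF fin, of x] x by simp
  define j where "j = cnt X x"
  have j1: "1 \<le> j" using c1 j_def by simp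
  have jc: "j \<le> card X" using cnt_le_card[OF fin] j_def by simp
  have ge: "x \<le> nth_dec X j" using KF[OF fin j1, of x] j_def by simp
  have "\<not> j \<le> cnt X (Suc x)" using c1 j_def by simp
  then have "\<not> Suc x \<le> nth_dec X j" using KF[OF fin j1, of "Suc x"] jc by simp
  then show ?thesis using ge j1 jc j_def by simp
qed

lemma GE:
  assumes fx: "finite X" and fy: "finite Y"
  shows "(\<forall>i. 1 \<le> i \<longrightarrow> i + k \<le> card Y \<longrightarrow> ent Y (i+k) \<le> ent X i) \<longleftrightarrow> (\<forall>t. cnt Y t \<le> cnt X t + k)"
proof
  assume H: "\<forall>i. 1 \<le> i \<longrightarrow> i + k \<le> card Y \<longrightarrow> ent Y (i+k) \<le> ent X i"
  show "\<forall>t. cnt Y t \<le> cnt X t + k"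
  proof (rule allI, rule ccontr)
    fix t assume "\<not> cnt Y t \<le> cnt X t + k"
    define i where "i = cnt X t + 1"
    have i1: "1 \<le> i" by (simp add: i_def)
    have "i + k \<le> cnt Y t" using \<open>\<not> cnt Y t \<le> cnt X t + k\<close> i_def by simp
    then have Y: "i + k \<le> card Y" "t \<le> nth_dec Y (i+k)" using KF[OF fy, of "i+k" t] i1 by auto
    have "ent Y (i+k) \<le> ent X i" using H i1 Y by blast
    then have "i \<le> card X \<and> nth_dec Y (i+k) \<le> nth_dec X i"
      using Y i1 by (auto simp: ent_def split: if_splits)
    then have "i \<le> cnt X t" using KF[OF fx i1, of t] Y by auto
    then show False using i_def by simp
  qed
next
  assume H: "\<forall>t. cnt Y t \<le> cnt X t + k"
  show "\<forall>i. 1 \<le> i \<longrightarrow> i + k \<le> card Y \<longrightarrow> ent Y (i+k) \<le> ent X i"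
  proof (intro allI impI)
    fix i assume i1: "1 \<le> i" and ik: "i + k \<le> card Y"
    define t where "t = nth_dec Y (i+k)"
    have "i + k \<le> cnt Y t" using KF[OF fy, of "i+k" t] i1 ik t_def by simp
    then have "i \<le> cnt X t" using H[rule_format, of t] by simp
    then have "i \<le> card X \<and> t \<le> nth_dec X i" using KF[OF fx i1] by simp
    then show "ent Y (i+k) \<le> ent X i" using i1 ik t_def by (simp add: ent_def)
  qed
qed

lemma GT:
  assumes fx: "finite X" and fy: "finite Y"
  shows "(\<forall>i. 1 \<le> i \<longrightarrow> i + k \<le> card Y \<longrightarrow> ent Y (i+k) < ent X i) \<longleftrightarrow> (\<forall>t. cnt Y t \<le> cnt X (Suc t) + k)"
proof
  assume H: "\<forall>i. 1 \<le> i \<longrightarrow> i + k \<le> card Y \<longrightarrow> ent Y (i+k) < ent X i"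
  show "\<forall>t. cnt Y t \<le> cnt X (Suc t) + k"
  proof (rule allI, rule ccontr)
    fix t assume "\<not> cnt Y t \<le> cnt X (Suc t) + k"
    define i where "i = cnt X (Suc t) + 1"
    have i1: "1 \<le> i" by (simp add: i_def)
    have "i + k \<le> cnt Y t" using \<open>\<not> cnt Y t \<le> cnt X (Suc t) + k\<close> i_def by simp
    then have Y: "i + k \<le> card Y" "t \<le> nth_dec Y (i+k)" using KF[OF fy, of "i+k" t] i1 by auto
    have "ent Y (i+k) < ent X i" using H i1 Y by blast
    then have "i \<le> card X \<and> nth_dec Y (i+k) < nth_dec X i"
      using Y i1 by (auto simp: ent_def split: if_splits)
    then have "i \<le> cnt X (Suc t)" using KF[OF fx i1, of "Suc t"] Y by auto
    then show False using i_def by simp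
  qed
next
  assume H: "\<forall>t. cnt Y t \<le> cnt X (Suc t) + k"
  show "\<forall>i. 1 \<le> i \<longrightarrow> i + k \<le> card Y \<longrightarrow> ent Y (i+k) < ent X i"
  proof (intro allI impI)
    fix i assume i1: "1 \<le> i" and ik: "i + k \<le> card Y"
    define t where "t = nth_dec Y (i+k)"
    have "i + k \<le> cnt Y t" using KF[OF fy, of "i+k" t] i1 ik t_def by simp
    then have "i \<le> cnt X (Suc t)" using H[rule_format, of t] by simp
    then have "i \<le> card X \<and> Suc t \<le> nth_dec X i" using KF[OF fx i1] by simp
    then show "ent Y (i+k) < ent X i" using i1 ik t_def by (simp add: ent_def)
  qed
qed



definition sig :: "nat set \<Rightarrow> nat set \<Rightarrow> nat set \<Rightarrow> nat \<Rightarrow> int" where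
  "sig U V N t = int (card {z\<in>N\<inter>V. t \<le> z}) - int (card {z\<in>N\<inter>U. t \<le> z})"

lemma card_split_N: "finite U \<Longrightarrow> card {x\<in>U. P x} = card {x\<in>U-N. P x} + card {x\<in>N\<inter>U. P x}"
proof -
  assume f: "finite U"
  have e: "{x\<in>U. P x} = {x\<in>U-N. P x} \<union> {x\<in>N\<inter>U. P x}" by auto
  have "card ({x\<in>U-N. P x} \<union> {x\<in>N\<inter>U. P x}) = card {x\<in>U-N. P x} + card {x\<in>N\<inter>U. P x}"
    by (rule card_Un_disjoint) (use f in auto)
  then show ?thesis using e by simp
qed

lemma cnt_move:
  assumes fU: "finite U" and fV: "finite V"
  shows "int (cnt (fst (move (U,V) N)) t) = int (cnt U t) + sig U V N t"
    and "int (cnt (snd (move (U,V) N)) t) = int (cnt V t) - sig U V N t"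
proof -
  have e1: "{x\<in>fst (move (U,V) N). t \<le> x} = {x\<in>U-N. t \<le> x} \<union> {z\<in>N\<inter>V. t \<le> z}"
    by (auto simp: move_def)
  have d1: "{x\<in>U-N. t \<le> x} \<inter> {z\<in>N\<inter>V. t \<le> z} = {}" by auto
  have c1: "card {x\<in>fst (move (U,V) N). t \<le> x} = card {x\<in>U-N. t \<le> x} + card {z\<in>N\<inter>V. t \<le> z}"
    unfolding e1 using fU fV d1 by (simp add: card_Un_disjoint)
  show "int (cnt (fst (move (U,V) N)) t) = int (cnt U t) + sig U V N t"
    unfolding cnt_def sig_def c1 card_split_N[OF fU, of "\<lambda>x. t \<le> x" N] by simp
  have e2: "{x\<in>snd (move (U,V) N). t \<le> x} = {x\<in>V-N. t \<le> x} \<union> {z\<in>N\<inter>U. t \<le> z}"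
    by (auto simp: move_def)
  have d2: "{x\<in>V-N. t \<le> x} \<inter> {z\<in>N\<inter>U. t \<le> z} = {}" by auto
  have c2: "card {x\<in>snd (move (U,V) N). t \<le> x} = card {x\<in>V-N. t \<le> x} + card {z\<in>N\<inter>U. t \<le> z}"
    unfolding e2 using fU fV d2 by (simp add: card_Un_disjoint)
  show "int (cnt (snd (move (U,V) N)) t) = int (cnt V t) - sig U V N t"
    unfolding cnt_def sig_def c2 card_split_N[OF fV, of "\<lambda>x. t \<le> x" N] by simp
qed

lemma card_move:
  assumes fU: "finite U" and fV: "finite V"
  shows "int (card (fst (move (U,V) N))) = int (card U) + sig U V N 0"
    and "int (card (snd (move (U,V) N))) = int (card V) - sig U V N 0"
  using cnt_move[OF fU fV, of N 0] by simp_all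

lemma finite_move: "finite U \<Longrightarrow> finite V \<Longrightarrow> finite (fst (move (U,V) N)) \<and> finite (snd (move (U,V) N))"
  by (simp add: move_def)

lemma move_empty[simp]: "move Y {} = Y"
  by (cases Y) (simp add: move_def)

lemma sig_empty[simp]: "sig U V {} t = 0"
  by (simp add: sig_def)

definition KK :: "nat \<Rightarrow> nat \<Rightarrow> nat set \<Rightarrow> nat set \<Rightarrow> nat set \<Rightarrow> nat set \<Rightarrow> bool" where
  "KK m m' A B C D \<longleftrightarrow>
     (m' = m \<longrightarrow> (\<forall>t. cnt D t \<le> cnt A (Suc t) \<and> cnt A t \<le> cnt D t + 1 \<and>
                     cnt C t \<le> cnt B (Suc t) + 1 \<and> cnt B t \<le> cnt C t)) \<and>
     (m' = m + 1 \<longrightarrow> (\<forall>t. cnt D t \<le> cnt A t \<and> cnt A t \<le> cnt D (Suc t) + 1 \<and>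
                     cnt C t \<le> cnt B t + 1 \<and> cnt B t \<le> cnt C (Suc t)))"

lemma ent_lt_PInf[simp]: "ent X i < PInfty"
  by (simp add: ent_def)

lemma ent_neq_PInf[simp]: "ent X i \<noteq> PInfty"
  by (simp add: ent_def)

lemma ent_neq_inf[simp]: "ent X i \<noteq> \<infinity>"
  by (simp add: ent_def)

lemma split_all3: "(\<forall>i. P i \<longrightarrow> Q i \<and> R i) \<longleftrightarrow> (\<forall>i. P i \<longrightarrow> Q i) \<and> (\<forall>i. P i \<longrightarrow> R i)"
  by blast

lemma b_a: "finite A \<Longrightarrow> finite D \<Longrightarrow>
  (\<forall>i. 1 \<le> i \<and> i \<le> card D \<longrightarrow> ent D i < ent A i) \<longleftrightarrow> (\<forall>t. cnt D t \<le> cnt A (Suc t))"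
  using GT[of A D 0] by (simp add: imp_conjL)

lemma b_b: "finite A \<Longrightarrow> finite D \<Longrightarrow> card A = card D + 1 \<Longrightarrow>
  (\<forall>i. 1 \<le> i \<and> i \<le> card D \<longrightarrow> ent A (i+1) \<le> ent D i) \<longleftrightarrow> (\<forall>t. cnt A t \<le> cnt D t + 1)"
  using GE[of D A 1] by (simp add: imp_conjL)

lemma b_c: assumes "finite B" "finite C" shows
  "(\<forall>i. 1 \<le> i \<and> i \<le> card C \<longrightarrow> ent C i < (if i = 1 then PInfty else ent B (i-1)))
     \<longleftrightarrow> (\<forall>t. cnt C t \<le> cnt B (Suc t) + 1)"
proof -
  have "(\<forall>i. 1 \<le> i \<and> i \<le> card C \<longrightarrow> ent C i < (if i = 1 then PInfty else ent B (i-1)))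
     \<longleftrightarrow> (\<forall>i. 1 \<le> i \<longrightarrow> i + 1 \<le> card C \<longrightarrow> ent C (i+1) < ent B i)"
  proof
    assume H: "\<forall>i. 1 \<le> i \<and> i \<le> card C \<longrightarrow> ent C i < (if i = 1 then PInfty else ent B (i-1))"
    show "\<forall>i. 1 \<le> i \<longrightarrow> i + 1 \<le> card C \<longrightarrow> ent C (i+1) < ent B i"
    proof (intro allI impI)
      fix i assume "1 \<le> (i::nat)" "i + 1 \<le> card C"
      then show "ent C (i+1) < ent B i" using H[rule_format, of "i+1"] by simp
    qed
  next
    assume H: "\<forall>i. 1 \<le> i \<longrightarrow> i + 1 \<le> card C \<longrightarrow> ent C (i+1) < ent B i"
    show "\<forall>i. 1 \<le> i \<and> i \<le> card C \<longrightarrow> ent C i < (if i = 1 then PInfty else ent B (i-1))"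
    proof (intro allI impI)
      fix i assume i: "1 \<le> (i::nat) \<and> i \<le> card C"
      show "ent C i < (if i = 1 then PInfty else ent B (i-1))"
      proof (cases "i = 1")
        case False
        have j: "1 \<le> i - 1" "i - 1 + 1 \<le> card C" using False i by auto
        then have "ent C ((i - 1) + 1) < ent B (i-1)" using H by blast
        then show ?thesis using False i by simp
      qed simp
    qed
  qed
  also have "\<dots> \<longleftrightarrow> (\<forall>t. cnt C t \<le> cnt B (Suc t) + 1)" using GT[OF assms, of 1] by simp
  finally show ?thesis .
qed

lemma b_d: "finite B \<Longrightarrow> finite C \<Longrightarrow> card C = card B \<Longrightarrow>
  (\<forall>i. 1 \<le> i \<and> i \<le> card C \<longrightarrow> ent B i \<le> ent C i) \<longleftrightarrow> (\<forall>t. cnt B t \<le> cnt C t)"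
  using GE[of C B 0] by (simp add: imp_conjL)

lemma b_a': "finite A \<Longrightarrow> finite D \<Longrightarrow>
  (\<forall>i. 1 \<le> i \<and> i \<le> card D \<longrightarrow> ent D i \<le> ent A i) \<longleftrightarrow> (\<forall>t. cnt D t \<le> cnt A t)"
  using GE[of A D 0] by (simp add: imp_conjL)

lemma b_b': assumes "finite A" "finite D" "card D = card A" shows
  "(\<forall>i. 1 \<le> i \<and> i \<le> card D \<longrightarrow> ent A (i+1) < ent D i) \<longleftrightarrow> (\<forall>t. cnt A t \<le> cnt D (Suc t) + 1)"
proof -
  have "(\<forall>i. 1 \<le> i \<and> i \<le> card D \<longrightarrow> ent A (i+1) < ent D i) \<longleftrightarrow>
        (\<forall>i. 1 \<le> i \<longrightarrow> i + 1 \<le> card A \<longrightarrow> ent A (i+1) < ent D i)"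
  proof
    assume H: "\<forall>i. 1 \<le> i \<and> i \<le> card D \<longrightarrow> ent A (i+1) < ent D i"
    then show "\<forall>i. 1 \<le> i \<longrightarrow> i + 1 \<le> card A \<longrightarrow> ent A (i+1) < ent D i" using assms(3) by auto
  next
    assume H: "\<forall>i. 1 \<le> i \<longrightarrow> i + 1 \<le> card A \<longrightarrow> ent A (i+1) < ent D i"
    show "\<forall>i. 1 \<le> i \<and> i \<le> card D \<longrightarrow> ent A (i+1) < ent D i"
    proof (intro allI impI)
      fix i assume i: "1 \<le> (i::nat) \<and> i \<le> card D"
      show "ent A (i+1) < ent D i"
      proof (cases "i + 1 \<le> card A")
        case True then show ?thesis using H i by auto
      next
        case False then show ?thesis using i by (simp add: ent_def)
      qed
    qed
  qed
  also have "\<dots> \<longleftrightarrow> (\<forall>t. cnt A t \<le> cnt D (Suc t) + 1)" using GT[of D A 1] assms by simp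
  finally show ?thesis .
qed

lemma b_c': assumes "finite B" "finite C" shows
  "(\<forall>i. 1 \<le> i \<and> i \<le> card C \<longrightarrow> ent C i \<le> (if i = 1 then PInfty else ent B (i-1)))
     \<longleftrightarrow> (\<forall>t. cnt C t \<le> cnt B t + 1)"
proof -
  have "(\<forall>i. 1 \<le> i \<and> i \<le> card C \<longrightarrow> ent C i \<le> (if i = 1 then PInfty else ent B (i-1)))
     \<longleftrightarrow> (\<forall>i. 1 \<le> i \<longrightarrow> i + 1 \<le> card C \<longrightarrow> ent C (i+1) \<le> ent B i)"
  proof
    assume H: "\<forall>i. 1 \<le> i \<and> i \<le> card C \<longrightarrow> ent C i \<le> (if i = 1 then PInfty else ent B (i-1))"
    show "\<forall>i. 1 \<le> i \<longrightarrow> i + 1 \<le> card C \<longrightarrow> ent C (i+1) \<le> ent B i"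
    proof (intro allI impI)
      fix i assume "1 \<le> (i::nat)" "i + 1 \<le> card C"
      then show "ent C (i+1) \<le> ent B i" using H[rule_format, of "i+1"] by simp
    qed
  next
    assume H: "\<forall>i. 1 \<le> i \<longrightarrow> i + 1 \<le> card C \<longrightarrow> ent C (i+1) \<le> ent B i"
    show "\<forall>i. 1 \<le> i \<and> i \<le> card C \<longrightarrow> ent C i \<le> (if i = 1 then PInfty else ent B (i-1))"
    proof (intro allI impI)
      fix i assume i: "1 \<le> (i::nat) \<and> i \<le> card C"
      show "ent C i \<le> (if i = 1 then PInfty else ent B (i-1))"
      proof (cases "i = 1")
        case False
        have j: "1 \<le> i - 1" "i - 1 + 1 \<le> card C" using False i by auto
        then have "ent C ((i - 1) + 1) \<le> ent B (i-1)" using H by blast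
        then show ?thesis using False i by simp
      qed simp
    qed
  qed
  also have "\<dots> \<longleftrightarrow> (\<forall>t. cnt C t \<le> cnt B t + 1)" using GE[OF assms, of 1] by simp
  finally show ?thesis .
qed

lemma b_d': assumes "finite B" "finite C" "card C = card B + 1" shows
  "(\<forall>i. 1 \<le> i \<and> i \<le> card C \<longrightarrow> ent B i < ent C i) \<longleftrightarrow> (\<forall>t. cnt B t \<le> cnt C (Suc t))"
proof -
  have "(\<forall>i. 1 \<le> i \<and> i \<le> card C \<longrightarrow> ent B i < ent C i) \<longleftrightarrow>
        (\<forall>i. 1 \<le> i \<longrightarrow> i + 0 \<le> card B \<longrightarrow> ent B (i+0) < ent C i)"
  proof
    assume H: "\<forall>i. 1 \<le> i \<and> i \<le> card C \<longrightarrow> ent B i < ent C i"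
    then show "\<forall>i. 1 \<le> i \<longrightarrow> i + 0 \<le> card B \<longrightarrow> ent B (i+0) < ent C i" using assms(3) by auto
  next
    assume H: "\<forall>i. 1 \<le> i \<longrightarrow> i + 0 \<le> card B \<longrightarrow> ent B (i+0) < ent C i"
    show "\<forall>i. 1 \<le> i \<and> i \<le> card C \<longrightarrow> ent B i < ent C i"
    proof (intro allI impI)
      fix i assume i: "1 \<le> (i::nat) \<and> i \<le> card C"
      show "ent B i < ent C i"
      proof (cases "i \<le> card B")
        case True then show ?thesis using H i by auto
      next
        case False then show ?thesis using i by (simp add: ent_def)
      qed
    qed
  qed
  also have "\<dots> \<longleftrightarrow> (\<forall>t. cnt B t \<le> cnt C (Suc t))" using GT[OF assms(2,1), of 0] by simp
  finally show ?thesis .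
qed

lemma BR:
  assumes fin: "finite A" "finite B" "finite C" "finite D"
    and cA: "card A = m+1" and cB: "card B = m" and cC: "card C = m'" and cD: "card D = m'"
    and mm: "m' = m \<or> m' = m + 1"
  shows "((m' = m \<longrightarrow>
         (\<forall>i. 1 \<le> i \<and> i \<le> card D \<longrightarrow> ent A i > ent D i \<and> ent D i \<ge> ent A (i + 1)) \<and>
         (\<forall>i. 1 \<le> i \<and> i \<le> card C \<longrightarrow> (if i = 1 then PInfty else ent B (i - 1)) > ent C i \<and> ent C i \<ge> ent B i)) \<and>
      (m' = m + 1 \<longrightarrow>
         (\<forall>i. 1 \<le> i \<and> i \<le> card D \<longrightarrow> ent A i \<ge> ent D i \<and> ent D i > ent A (i + 1)) \<and>
         (\<forall>i. 1 \<le> i \<and> i \<le> card C \<longrightarrow> (if i = 1 then PInfty else ent B (i - 1)) \<ge> ent C i \<and> ent C i > ent B i)))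
     \<longleftrightarrow> KK m m' A B C D"
proof (cases "m' = m")
  case True
  have cAD: "card A = card D + 1" and cCB: "card C = card B" using cA cB cC cD True by auto
  have L: "(\<forall>i. 1 \<le> i \<and> i \<le> card D \<longrightarrow> ent A i > ent D i \<and> ent D i \<ge> ent A (i + 1)) \<longleftrightarrow>
      (\<forall>t. cnt D t \<le> cnt A (Suc t)) \<and> (\<forall>t. cnt A t \<le> cnt D t + 1)"
    by (simp only: split_all3 b_a[OF fin(1,4)] b_b[OF fin(1,4) cAD])
  have R: "(\<forall>i. 1 \<le> i \<and> i \<le> card C \<longrightarrow> (if i = 1 then PInfty else ent B (i - 1)) > ent C i \<and> ent C i \<ge> ent B i)
      \<longleftrightarrow> (\<forall>t. cnt C t \<le> cnt B (Suc t) + 1) \<and> (\<forall>t. cnt B t \<le> cnt C t)"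
    by (simp only: split_all3 b_c[OF fin(2,3)] b_d[OF fin(2,3) cCB])
  have ne: "m' \<noteq> m + 1" using True by simp
  show ?thesis unfolding L R KK_def all_conj_distrib using True ne by blast
next
  case False
  then have T: "m' = m + 1" using mm by simp
  have cAD: "card D = card A" and cCB: "card C = card B + 1" using cA cB cC cD T by auto
  have L: "(\<forall>i. 1 \<le> i \<and> i \<le> card D \<longrightarrow> ent A i \<ge> ent D i \<and> ent D i > ent A (i + 1)) \<longleftrightarrow>
      (\<forall>t. cnt D t \<le> cnt A t) \<and> (\<forall>t. cnt A t \<le> cnt D (Suc t) + 1)"
    by (simp only: split_all3 b_a'[OF fin(1,4)] b_b'[OF fin(1,4) cAD])
  have R: "(\<forall>i. 1 \<le> i \<and> i \<le> card C \<longrightarrow> (if i = 1 then PInfty else ent B (i - 1)) \<ge> ent C i \<and> ent C i > ent B i)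
      \<longleftrightarrow> (\<forall>t. cnt C t \<le> cnt B t + 1) \<and> (\<forall>t. cnt B t \<le> cnt C (Suc t))"
    by (simp only: split_all3 b_c'[OF fin(2,3)] b_d'[OF fin(2,3) cCB])
  show ?thesis unfolding L R KK_def all_conj_distrib using T False by blast
qed



definition RR :: "nat \<Rightarrow> nat \<Rightarrow> nat set \<Rightarrow> nat set \<Rightarrow> nat set \<Rightarrow> nat set \<Rightarrow> bool" where
  "RR m m' A B C D \<longleftrightarrow> ((m' = m \<longrightarrow>
         (\<forall>i. 1 \<le> i \<and> i \<le> card D \<longrightarrow> ent A i > ent D i \<and> ent D i \<ge> ent A (i + 1)) \<and>
         (\<forall>i. 1 \<le> i \<and> i \<le> card C \<longrightarrow> (if i = 1 then PInfty else ent B (i - 1)) > ent C i \<and> ent C i \<ge> ent B i)) \<and>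
      (m' = m + 1 \<longrightarrow>
         (\<forall>i. 1 \<le> i \<and> i \<le> card D \<longrightarrow> ent A i \<ge> ent D i \<and> ent D i > ent A (i + 1)) \<and>
         (\<forall>i. 1 \<le> i \<and> i \<le> card C \<longrightarrow> (if i = 1 then PInfty else ent B (i - 1)) \<ge> ent C i \<and> ent C i > ent B i)))"

lemma Bplus_mem:
  "(L, L') \<in> Bplus Z Z' \<longleftrightarrow> L \<in> Sbar Z \<and> L' \<in> Sbar Z' \<and> defect L' = 1 - defect L \<and>
     RR (card (snd Z)) (card (fst Z')) (fst L) (snd L) (fst L') (snd L')"
  by (simp add: Bplus_def RR_def Let_def)

lemma RR_KK:
  assumes "finite A" "finite B" "finite C" "finite D"
    and "card A = m+1" "card B = m" "card C = m'" "card D = m'" "m' = m \<or> m' = m + 1"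
  shows "RR m m' A B C D \<longleftrightarrow> KK m m' A B C D"
  unfolding RR_def using BR[OF assms] .

lemma bal1:
  assumes s: "special1 m (A,B)"
  shows "\<forall>t. cnt B t \<le> cnt A t \<and> cnt A t \<le> cnt B t + 1"
proof -
  have fA: "finite A" and fB: "finite B" and cA: "card A = m+1" and cB: "card B = m"
    and sp: "\<And>i. 1 \<le> i \<Longrightarrow> i \<le> m \<Longrightarrow> nth_dec A i \<ge> nth_dec B i \<and> nth_dec B i \<ge> nth_dec A (i + 1)"
    using s by (auto simp: special1_def is_symbol_def)
  have h1: "\<forall>i. 1 \<le> i \<longrightarrow> i + 0 \<le> card B \<longrightarrow> ent B (i+0) \<le> ent A i"
    using sp cA cB by (auto simp: ent_def)
  have h2: "\<forall>i. 1 \<le> i \<longrightarrow> i + 1 \<le> card A \<longrightarrow> ent A (i+1) \<le> ent B i"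
    using sp cA cB by (auto simp: ent_def)
  show ?thesis using GE[OF fA fB, of 0] GE[OF fB fA, of 1] h1 h2 by simp
qed

lemma bal0:
  assumes s: "special0 m' (C,D)"
  shows "\<forall>t. cnt D t \<le> cnt C t \<and> cnt C t \<le> cnt D t + 1"
proof -
  have fC: "finite C" and fD: "finite D" and cC: "card C = m'" and cD: "card D = m'"
    and sp1: "\<And>i. 1 \<le> i \<Longrightarrow> i \<le> m' \<Longrightarrow> nth_dec C i \<ge> nth_dec D i"
    and sp2: "\<And>i. 1 \<le> i \<Longrightarrow> i < m' \<Longrightarrow> nth_dec D i \<ge> nth_dec C (i + 1)"
    using s by (auto simp: special0_def is_symbol_def)
  have h1: "\<forall>i. 1 \<le> i \<longrightarrow> i + 0 \<le> card D \<longrightarrow> ent D (i+0) \<le> ent C i"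
    using sp1 cC cD by (auto simp: ent_def)
  have h2: "\<forall>i. 1 \<le> i \<longrightarrow> i + 1 \<le> card C \<longrightarrow> ent C (i+1) \<le> ent D i"
    using sp2 cC cD by (auto simp: ent_def)
  show ?thesis using GE[OF fC fD, of 0] GE[OF fD fC, of 1] h1 h2 by simp
qed

lemma half_nat: "2 * (x::nat) \<le> 2 * y + 1 \<Longrightarrow> x \<le> y" by arith

lemma half_nat2: "2 * (x::nat) \<le> 2 * y + 3 \<Longrightarrow> x \<le> y + 1" by arith

lemma KK_transfer:
  assumes bZ: "\<forall>t. cnt B t \<le> cnt A t \<and> cnt A t \<le> cnt B t + 1"
    and bZ': "\<forall>t. cnt D t \<le> cnt C t \<and> cnt C t \<le> cnt D t + 1"
    and S: "\<forall>t. cnt A' t + cnt B' t = cnt A t + cnt B t"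
    and T: "\<forall>t. cnt C' t + cnt D' t = cnt C t + cnt D t"
    and K: "KK m m' A' B' C' D'"
  shows "KK m m' A B C D"
  unfolding KK_def
proof (rule conjI; intro impI allI)
  fix t assume mm: "m' = m"
  have k: "cnt D' t \<le> cnt A' (Suc t)" "cnt A' t \<le> cnt D' t + 1"
     "cnt C' t \<le> cnt B' (Suc t) + 1" "cnt B' t \<le> cnt C' t" using K mm unfolding KK_def by auto
  have b: "cnt B t \<le> cnt A t" "cnt A t \<le> cnt B t + 1" "cnt B (Suc t) \<le> cnt A (Suc t)" "cnt A (Suc t) \<le> cnt B (Suc t) + 1"
    using bZ by auto
  have b': "cnt D t \<le> cnt C t" "cnt C t \<le> cnt D t + 1" using bZ' by auto
  have s: "cnt A' t + cnt B' t = cnt A t + cnt B t" "cnt A' (Suc t) + cnt B' (Suc t) = cnt A (Suc t) + cnt B (Suc t)"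
    using S by auto
  have tt: "cnt C' t + cnt D' t = cnt C t + cnt D t" using T by auto
  have P1: "cnt C t + cnt D t \<le> cnt A (Suc t) + cnt B (Suc t) + 1" using k(1,3) s(2) tt by linarith
  have P2: "cnt A t + cnt B t \<le> cnt C t + cnt D t + 1" using k(2,4) s(1) tt by linarith
  have "2 * cnt D t \<le> 2 * cnt A (Suc t) + 1" using P1 b(3) b'(1) by linarith
  moreover have "2 * cnt A t \<le> 2 * cnt D t + 3" using P2 b(2) b'(2) by linarith
  moreover have "2 * cnt C t \<le> 2 * cnt B (Suc t) + 3" using P1 b(4) b'(2) by linarith
  moreover have "2 * cnt B t \<le> 2 * cnt C t + 1" using P2 b(1) b'(1) by linarith
  ultimately show "cnt D t \<le> cnt A (Suc t) \<and> cnt A t \<le> cnt D t + 1 \<and>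
                     cnt C t \<le> cnt B (Suc t) + 1 \<and> cnt B t \<le> cnt C t"
    using half_nat half_nat2 by blast
next
  fix t assume mm: "m' = m + 1"
  have k: "cnt D' t \<le> cnt A' t" "cnt A' t \<le> cnt D' (Suc t) + 1"
     "cnt C' t \<le> cnt B' t + 1" "cnt B' t \<le> cnt C' (Suc t)" using K mm unfolding KK_def by auto
  have b: "cnt B t \<le> cnt A t" "cnt A t \<le> cnt B t + 1"
    using bZ by auto
  have b': "cnt D t \<le> cnt C t" "cnt C t \<le> cnt D t + 1" "cnt D (Suc t) \<le> cnt C (Suc t)" "cnt C (Suc t) \<le> cnt D (Suc t) + 1"
    using bZ' by auto
  have s: "cnt A' t + cnt B' t = cnt A t + cnt B t"
    using S by auto
  have tt: "cnt C' t + cnt D' t = cnt C t + cnt D t" "cnt C' (Suc t) + cnt D' (Suc t) = cnt C (Suc t) + cnt D (Suc t)"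
    using T by auto
  have P1: "cnt C t + cnt D t \<le> cnt A t + cnt B t + 1" using k(1,3) s tt(1) by linarith
  have P2: "cnt A t + cnt B t \<le> cnt C (Suc t) + cnt D (Suc t) + 1" using k(2,4) s tt(2) by linarith
  have "2 * cnt D t \<le> 2 * cnt A t + 1" using P1 b(1) b'(1) by linarith
  moreover have "2 * cnt A t \<le> 2 * cnt D (Suc t) + 3" using P2 b(2) b'(4) by linarith
  moreover have "2 * cnt C t \<le> 2 * cnt B t + 3" using P1 b(2) b'(2) by linarith
  moreover have "2 * cnt B t \<le> 2 * cnt C (Suc t) + 1" using P2 b(1) b'(3) by linarith
  ultimately show "cnt D t \<le> cnt A t \<and> cnt A t \<le> cnt D (Suc t) + 1 \<and>
                     cnt C t \<le> cnt B t + 1 \<and> cnt B t \<le> cnt C (Suc t)"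
    using half_nat half_nat2 by blast
qed

lemma defect_move:
  assumes "finite U" "finite V"
  shows "defect (move (U,V) N) = int (card U) - int (card V) + 2 * sig U V N 0"
  using card_move[OF assms, of N] by (simp add: defect_def)

lemma DZZ_char:
  assumes s1: "special1 m (A,B)" and s0: "special0 m' (C,D)" and mm: "m' = m \<or> m' = m + 1"
  shows "(L, L') \<in> DZZ (A,B) (C,D) \<longleftrightarrow>
    (\<exists>M N. M \<subseteq> singles (A,B) \<and> N \<subseteq> singles (C,D) \<and> L = move (A,B) M \<and> L' = move (C,D) N \<and>
       sig A B M 0 = 0 \<and> sig C D N 0 = 0 \<and> KK m m' (fst L) (snd L) (fst L') (snd L'))"
proof -
  have fA: "finite A" and fB: "finite B" and cA: "card A = m+1" and cB: "card B = m"
    using s1 by (auto simp: special1_def is_symbol_def)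
  have fC: "finite C" and fD: "finite D" and cC: "card C = m'" and cD: "card D = m'"
    using s0 by (auto simp: special0_def is_symbol_def)
  have key: "\<And>M N. (move (A,B) M, move (C,D) N) \<in> Bplus (A,B) (C,D) \<and> defect (move (A,B) M) = 1 \<and> defect (move (C,D) N) = 0
     \<longleftrightarrow> (move (A,B) M \<in> Sbar (A,B) \<and> move (C,D) N \<in> Sbar (C,D) \<and> sig A B M 0 = 0 \<and> sig C D N 0 = 0 \<and>
          KK m m' (fst (move (A,B) M)) (snd (move (A,B) M)) (fst (move (C,D) N)) (snd (move (C,D) N)))"
  proof -
    fix M N
    have dM: "defect (move (A,B) M) = 1 + 2 * sig A B M 0" using defect_move[OF fA fB, of M] cA cB by simp
    have dN: "defect (move (C,D) N) = 2 * sig C D N 0" using defect_move[OF fC fD, of N] cC cD by simp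
    have cM: "int (card (fst (move (A,B) M))) = int (card A) + sig A B M 0"
             "int (card (snd (move (A,B) M))) = int (card B) - sig A B M 0" using card_move[OF fA fB] by auto
    have cN: "int (card (fst (move (C,D) N))) = int (card C) + sig C D N 0"
             "int (card (snd (move (C,D) N))) = int (card D) - sig C D N 0" using card_move[OF fC fD] by auto
    have fM: "finite (fst (move (A,B) M))" "finite (snd (move (A,B) M))" using finite_move[OF fA fB] by auto
    have fN: "finite (fst (move (C,D) N))" "finite (snd (move (C,D) N))" using finite_move[OF fC fD] by auto
    show "?thesis M N"
    proof
      assume H: "(move (A,B) M, move (C,D) N) \<in> Bplus (A,B) (C,D) \<and> defect (move (A,B) M) = 1 \<and> defect (move (C,D) N) = 0"
      have z: "sig A B M 0 = 0" "sig C D N 0 = 0" using H dM dN by auto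
      have cards: "card (fst (move (A,B) M)) = m+1" "card (snd (move (A,B) M)) = m"
         "card (fst (move (C,D) N)) = m'" "card (snd (move (C,D) N)) = m'"
        using cM cN z cA cB cC cD by linarith+
      have RR: "RR m m' (fst (move (A,B) M)) (snd (move (A,B) M)) (fst (move (C,D) N)) (snd (move (C,D) N))"
        using H cB cC unfolding Bplus_mem by simp
      show "move (A,B) M \<in> Sbar (A,B) \<and> move (C,D) N \<in> Sbar (C,D) \<and> sig A B M 0 = 0 \<and> sig C D N 0 = 0 \<and>
          KK m m' (fst (move (A,B) M)) (snd (move (A,B) M)) (fst (move (C,D) N)) (snd (move (C,D) N))"
        using H z RR RR_KK[OF fM fN cards mm] unfolding Bplus_mem by simp
    next
      assume H: "move (A,B) M \<in> Sbar (A,B) \<and> move (C,D) N \<in> Sbar (C,D) \<and> sig A B M 0 = 0 \<and> sig C D N 0 = 0 \<and>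
          KK m m' (fst (move (A,B) M)) (snd (move (A,B) M)) (fst (move (C,D) N)) (snd (move (C,D) N))"
      have z: "sig A B M 0 = 0" "sig C D N 0 = 0" using H by auto
      have cards: "card (fst (move (A,B) M)) = m+1" "card (snd (move (A,B) M)) = m"
         "card (fst (move (C,D) N)) = m'" "card (snd (move (C,D) N)) = m'"
        using cM cN z cA cB cC cD by linarith+
      have RR: "RR m m' (fst (move (A,B) M)) (snd (move (A,B) M)) (fst (move (C,D) N)) (snd (move (C,D) N))"
        using H RR_KK[OF fM fN cards mm] by simp
      show "(move (A,B) M, move (C,D) N) \<in> Bplus (A,B) (C,D) \<and> defect (move (A,B) M) = 1 \<and> defect (move (C,D) N) = 0"
        unfolding Bplus_mem using H RR dM dN cB cC by simp
    qed
  qed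
  show ?thesis
  proof
    assume H: "(L, L') \<in> DZZ (A,B) (C,D)"
    then have "L \<in> Sbar (A,B)" "L' \<in> Sbar (C,D)" by (auto simp: DZZ_def Sdef_def)
    then obtain M N where MN: "M \<subseteq> singles (A,B)" "N \<subseteq> singles (C,D)" "L = move (A,B) M" "L' = move (C,D) N"
      unfolding Sbar_def by blast
    have "(move (A,B) M, move (C,D) N) \<in> Bplus (A,B) (C,D) \<and> defect (move (A,B) M) = 1 \<and> defect (move (C,D) N) = 0"
      using H MN by (auto simp: DZZ_def Sdef_def)
    then show "\<exists>M N. M \<subseteq> singles (A,B) \<and> N \<subseteq> singles (C,D) \<and> L = move (A,B) M \<and> L' = move (C,D) N \<and>
       sig A B M 0 = 0 \<and> sig C D N 0 = 0 \<and> KK m m' (fst L) (snd L) (fst L') (snd L')"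
      using key MN by blast
  next
    assume "\<exists>M N. M \<subseteq> singles (A,B) \<and> N \<subseteq> singles (C,D) \<and> L = move (A,B) M \<and> L' = move (C,D) N \<and>
       sig A B M 0 = 0 \<and> sig C D N 0 = 0 \<and> KK m m' (fst L) (snd L) (fst L') (snd L')"
    then obtain M N where MN: "M \<subseteq> singles (A,B)" "N \<subseteq> singles (C,D)" "L = move (A,B) M" "L' = move (C,D) N"
       "sig A B M 0 = 0" "sig C D N 0 = 0" "KK m m' (fst L) (snd L) (fst L') (snd L')" by blast
    have S: "move (A,B) M \<in> Sbar (A,B)" "move (C,D) N \<in> Sbar (C,D)" using MN unfolding Sbar_def by blast+
    have "(move (A,B) M, move (C,D) N) \<in> Bplus (A,B) (C,D) \<and> defect (move (A,B) M) = 1 \<and> defect (move (C,D) N) = 0"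
      using key[of M N] MN S by simp
    then show "(L, L') \<in> DZZ (A,B) (C,D)" using MN S by (auto simp: DZZ_def Sdef_def)
  qed
qed

lemma base:
  assumes s1: "special1 m (A,B)" and s0: "special0 m' (C,D)" and mm: "m' = m \<or> m' = m + 1"
    and ne: "DZZ (A,B) (C,D) \<noteq> {}"
  shows "((A,B),(C,D)) \<in> DZZ (A,B) (C,D)"
proof -
  have fA: "finite A" and fB: "finite B" using s1 by (auto simp: special1_def is_symbol_def)
  have fC: "finite C" and fD: "finite D" using s0 by (auto simp: special0_def is_symbol_def)
  obtain L L' where "(L, L') \<in> DZZ (A,B) (C,D)" using ne by auto
  then obtain M N where MN: "L = move (A,B) M" "L' = move (C,D) N"
     "KK m m' (fst L) (snd L) (fst L') (snd L')"
    using DZZ_char[OF s1 s0 mm] by blast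
  have S: "\<forall>t. cnt (fst L) t + cnt (snd L) t = cnt A t + cnt B t"
  proof
    fix t show "cnt (fst L) t + cnt (snd L) t = cnt A t + cnt B t"
      using cnt_move[OF fA fB, of M t] unfolding MN(1) by linarith
  qed
  have T: "\<forall>t. cnt (fst L') t + cnt (snd L') t = cnt C t + cnt D t"
  proof
    fix t show "cnt (fst L') t + cnt (snd L') t = cnt C t + cnt D t"
      using cnt_move[OF fC fD, of N t] unfolding MN(2) by linarith
  qed
  have K: "KK m m' A B C D" using KK_transfer[OF bal1[OF s1] bal0[OF s0] S T MN(3)] .
  show ?thesis using DZZ_char[OF s1 s0 mm, of "(A,B)" "(C,D)"] K
    by (metis empty_subsetI fst_conv move_empty sig_empty snd_conv)
qed



lemma sig_cnt: "sig U V N t = int (cnt (N\<inter>V) t) - int (cnt (N\<inter>U) t)"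
  by (simp add: sig_def cnt_def)

lemma sig_split: "finite N \<Longrightarrow> a \<le> b \<Longrightarrow>
  sig U V N a = sig U V N b + int (card {z\<in>N\<inter>V. a \<le> z \<and> z < b}) - int (card {z\<in>N\<inter>U. a \<le> z \<and> z < b})"
  unfolding sig_cnt using cnt_split[of "N\<inter>V" a b] cnt_split[of "N\<inter>U" a b] by simp

lemma sig_pair:
  assumes "x \<in> U" "x \<notin> V" "y \<in> V" "y \<notin> U"
  shows "sig U V {x,y} t = (if t \<le> y then 1 else 0) - (if t \<le> x then 1 else 0)"
proof -
  have xy: "x \<noteq> y" using assms by auto
  have e1: "{z\<in>{x,y}\<inter>V. t \<le> z} = (if t \<le> y then {y} else {})" using assms by auto
  have e2: "{z\<in>{x,y}\<inter>U. t \<le> z} = (if t \<le> x then {x} else {})" using assms by auto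
  show ?thesis unfolding sig_def e1 e2 by simp
qed

locale win =
  fixes U V :: "nat set" and g1 g2 :: "nat \<Rightarrow> int"
  assumes fU: "finite U" and fV: "finite V"
    and balU: "\<And>t. cnt V t \<le> cnt U t" and balV: "\<And>t. cnt U t \<le> cnt V t + 1"
    and g1m: "\<And>t. g1 (Suc t) \<le> g1 t \<and> g1 t \<le> g1 (Suc t) + 1"
    and g2m: "\<And>t. g2 (Suc t) \<le> g2 t \<and> g2 t \<le> g2 (Suc t) + 1"
    and v0: "\<And>t. g1 t \<le> int (cnt U t) \<and> int (cnt U t) \<le> g1 (Suc t) + 1 \<and>
                  g2 t \<le> int (cnt V t) \<and> int (cnt V t) \<le> g2 (Suc t) + 1"
begin

definition vt :: "int \<Rightarrow> nat \<Rightarrow> bool" where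
  "vt s t \<longleftrightarrow> g1 t \<le> int (cnt U t) + s \<and> int (cnt U t) + s \<le> g1 (Suc t) + 1 \<and>
              g2 t \<le> int (cnt V t) - s \<and> int (cnt V t) - s \<le> g2 (Suc t) + 1"

definition good :: "nat set \<Rightarrow> bool" where
  "good N \<longleftrightarrow> N \<subseteq> singles (U,V) \<and> sig U V N 0 = 0 \<and> (\<forall>t. vt (sig U V N t) t)"

definition blocks :: "nat \<Rightarrow> bool" where
  "blocks b \<longleftrightarrow> g1 b = g1 (Suc b) + 1 \<or> g2 b = g2 (Suc b) + 1"

definition cpair :: "nat set \<Rightarrow> bool" where
  "cpair P \<longleftrightarrow> (\<exists>x y. P = {x,y} \<and> x \<in> U \<and> x \<notin> V \<and> y \<in> V \<and> y \<notin> U \<and>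
       (\<forall>z\<in>U\<union>V. \<not> (min x y < z \<and> z < max x y)))"

definition nb :: "nat \<Rightarrow> nat \<Rightarrow> bool" where
  "nb a c \<longleftrightarrow> (\<forall>b. a < b \<and> b \<le> c \<longrightarrow> \<not> blocks b)"

lemma vt0: "vt 0 t" using v0[of t] by (simp add: vt_def)

lemma F1: "good N \<Longrightarrow> blocks b \<Longrightarrow> sig U V N b = 0"
proof -
  assume g: "good N" and b: "blocks b"
  have a: "vt (sig U V N b) b" using g by (simp add: good_def)
  show ?thesis using a vt0[of b] b unfolding vt_def blocks_def by linarith
qed

lemma gconst:
  assumes nb: "nb a c" and an: "a \<le> n" and nc: "n \<le> c"
  shows "g1 (Suc a) = g1 (Suc n) \<and> g2 (Suc a) = g2 (Suc n)"
  using an nc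
proof (induction n rule: dec_induct)
  case base then show ?case by simp
next
  case (step n)
  have "\<not> blocks (Suc n)" using nb step unfolding nb_def by auto
  then have "g1 (Suc (Suc n)) = g1 (Suc n) \<and> g2 (Suc (Suc n)) = g2 (Suc n)"
    using g1m[of "Suc n"] g2m[of "Suc n"] unfolding blocks_def by linarith
  then show ?case using step by simp
qed

lemma F3:
  assumes nb: "nb a c" and ac: "a \<le> c"
  shows "card {z\<in>U. a \<le> z \<and> z < Suc c} \<le> 1 \<and> card {z\<in>V. a \<le> z \<and> z < Suc c} \<le> 1"
proof -
  have g: "g1 (Suc a) = g1 (Suc c) \<and> g2 (Suc a) = g2 (Suc c)" using gconst[OF nb ac] by simp
  have sU: "cnt U a = cnt U (Suc c) + card {z\<in>U. a \<le> z \<and> z < Suc c}" using cnt_split[OF fU, of a "Suc c"] ac by simp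
  have sV: "cnt V a = cnt V (Suc c) + card {z\<in>V. a \<le> z \<and> z < Suc c}" using cnt_split[OF fV, of a "Suc c"] ac by simp
  have "int (cnt U a) \<le> g1 (Suc a) + 1" "g1 (Suc c) \<le> int (cnt U (Suc c))"
       "int (cnt V a) \<le> g2 (Suc a) + 1" "g2 (Suc c) \<le> int (cnt V (Suc c))"
    using v0[of a] v0[of "Suc c"] by auto
  then show ?thesis using g sU sV by linarith
qed

lemma uniqU:
  assumes "nb a c" "x \<in> U" "x' \<in> U" "a \<le> x" "x \<le> c" "a \<le> x'" "x' \<le> c"
  shows "x = x'"
proof -
  have "card {z\<in>U. a \<le> z \<and> z < Suc c} \<le> 1" using F3[OF assms(1)] assms by linarith
  moreover have "finite {z\<in>U. a \<le> z \<and> z < Suc c}" using fU by simp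
  ultimately show ?thesis using assms card_le_Suc0_iff_eq by (metis (no_types, lifting) One_nat_def le_imp_less_Suc mem_Collect_eq)
qed

lemma uniqV:
  assumes "nb a c" "x \<in> V" "x' \<in> V" "a \<le> x" "x \<le> c" "a \<le> x'" "x' \<le> c"
  shows "x = x'"
proof -
  have "card {z\<in>V. a \<le> z \<and> z < Suc c} \<le> 1" using F3[OF assms(1)] assms by linarith
  moreover have "finite {z\<in>V. a \<le> z \<and> z < Suc c}" using fV by simp
  ultimately show ?thesis using assms card_le_Suc0_iff_eq by (metis (no_types, lifting) One_nat_def le_imp_less_Suc mem_Collect_eq)
qed

lemma GP:
  assumes g: "good {x,y}" and xy: "x \<in> U" "x \<notin> V" "y \<in> V" "y \<notin> U"
  shows "nb (min x y) (max x y)"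
  unfolding nb_def
proof (intro allI impI notI)
  fix b assume b: "min x y < b \<and> b \<le> max x y" and bl: "blocks b"
  have "sig U V {x,y} b = 0" using F1[OF g bl] .
  moreover have "sig U V {x,y} b = (if b \<le> y then 1 else 0) - (if b \<le> x then 1 else 0)"
    using sig_pair[OF xy] .
  ultimately show False using b by (auto simp: min_def max_def split: if_splits)
qed

lemma nb_union:
  assumes "nb a c" "nb a' c'" "a \<le> p" "p \<le> c" "a' \<le> p" "p \<le> c'"
  shows "nb (min a a') (max c c')"
  unfolding nb_def
proof (intro allI impI)
  fix b assume b: "min a a' < b \<and> b \<le> max c c'"
  have "(a < b \<and> b \<le> c) \<or> (a' < b \<and> b \<le> c')"
  proof (cases "b \<le> p")
    case True
    then show ?thesis using b assms(3-6) by (cases "a < b") (auto simp: min_def split: if_splits)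
  next
    case False
    then show ?thesis using b assms(3-6) by (cases "b \<le> c") (auto simp: max_def split: if_splits)
  qed
  then show "\<not> blocks b" using assms(1,2) unfolding nb_def by blast
qed

lemma same:
  assumes gP: "good {x,y}" and xy: "x \<in> U" "x \<notin> V" "y \<in> V" "y \<notin> U"
    and gQ: "good {x',y'}" and xy': "x' \<in> U" "x' \<notin> V" "y' \<in> V" "y' \<notin> U"
    and p: "min x y \<le> p" "p \<le> max x y" "min x' y' \<le> p" "p \<le> max x' y'"
  shows "x = x' \<and> y = y'"
proof -
  have n: "nb (min (min x y) (min x' y')) (max (max x y) (max x' y'))"
    using nb_union[OF GP[OF gP xy] GP[OF gQ xy'] p] .
  have "x = x'" using uniqU[OF n xy(1) xy'(1)] by linarith
  moreover have "y = y'" using uniqV[OF n xy(3) xy'(3)] by linarith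
  ultimately show ?thesis by simp
qed

definition Psi0 :: "nat set set" where
  "Psi0 = {P. cpair P \<and> good P}"

lemma Psi0_D:
  assumes "P \<in> Psi0"
  obtains x y where "P = {x,y}" "x \<in> U" "x \<notin> V" "y \<in> V" "y \<notin> U" "good {x,y}"
     "\<forall>z\<in>U\<union>V. \<not> (min x y < z \<and> z < max x y)"
  using assms unfolding Psi0_def cpair_def by blast

lemma Psi0_disj: "P \<in> Psi0 \<Longrightarrow> Q \<in> Psi0 \<Longrightarrow> P \<noteq> Q \<Longrightarrow> P \<inter> Q = {}"
proof (rule ccontr)
  assume P: "P \<in> Psi0" and Q: "Q \<in> Psi0" and ne: "P \<noteq> Q" and "P \<inter> Q \<noteq> {}"
  then obtain z where z: "z \<in> P" "z \<in> Q" by blast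
  obtain x y where Pd: "P = {x,y}" "x \<in> U" "x \<notin> V" "y \<in> V" "y \<notin> U" "good {x,y}" using Psi0_D[OF P] by metis
  obtain x' y' where Qd: "Q = {x',y'}" "x' \<in> U" "x' \<notin> V" "y' \<in> V" "y' \<notin> U" "good {x',y'}" using Psi0_D[OF Q] by metis
  have "z = x \<and> z = x' \<or> z = y \<and> z = y'" using z Pd Qd by auto
  then have "x = x' \<and> y = y'"
  proof
    assume "z = x \<and> z = x'"
    then show ?thesis using same[OF Pd(6) Pd(2-5) Qd(6) Qd(2-5), of z] by (auto simp: min_def max_def)
  next
    assume "z = y \<and> z = y'"
    then show ?thesis using same[OF Pd(6) Pd(2-5) Qd(6) Qd(2-5), of z] by (auto simp: min_def max_def)
  qed
  then show False using ne Pd Qd by simp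
qed

lemma Psi0_sig: "P \<in> Psi0 \<Longrightarrow> Q \<in> Psi0 \<Longrightarrow> sig U V P t \<noteq> 0 \<Longrightarrow> sig U V Q t \<noteq> 0 \<Longrightarrow> P = Q"
proof -
  assume P: "P \<in> Psi0" and Q: "Q \<in> Psi0" and sP: "sig U V P t \<noteq> 0" and sQ: "sig U V Q t \<noteq> 0"
  obtain x y where Pd: "P = {x,y}" "x \<in> U" "x \<notin> V" "y \<in> V" "y \<notin> U" "good {x,y}" using Psi0_D[OF P] by metis
  obtain x' y' where Qd: "Q = {x',y'}" "x' \<in> U" "x' \<notin> V" "y' \<in> V" "y' \<notin> U" "good {x',y'}" using Psi0_D[OF Q] by metis
  have a: "min x y \<le> t \<and> t \<le> max x y"
    using sP sig_pair[OF Pd(2-5), of t] Pd(1) by (auto simp: min_def max_def split: if_splits)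
  have b: "min x' y' \<le> t \<and> t \<le> max x' y'"
    using sQ sig_pair[OF Qd(2-5), of t] Qd(1) by (auto simp: min_def max_def split: if_splits)
  show "P = Q" using same[OF Pd(6) Pd(2-5) Qd(6) Qd(2-5), of t] a b Pd(1) Qd(1) by simp
qed

end



context win
begin

lemma cover:
  assumes gN: "good N" and xN: "x \<in> N"
  shows "\<exists>P\<in>Psi0. x \<in> P \<and> P \<subseteq> N"
proof -
  have Ns: "N \<subseteq> singles (U,V)" and s0: "sig U V N 0 = 0" and vN: "\<And>t. vt (sig U V N t) t"
    using gN by (auto simp: good_def)
  have NUV: "N \<subseteq> U \<union> V" using Ns by (auto simp: singles_def)
  have fN: "finite N" using NUV fU fV finite_subset by blast
  define Mb where "Mb = Suc (Max (U \<union> V))"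
  have Mb: "\<And>z. z \<in> U \<union> V \<Longrightarrow> z < Mb"
    unfolding Mb_def using fU fV by (simp add: le_imp_less_Suc)
  have xMb: "x < Mb" using Mb NUV xN by blast
  define Lset where "Lset = {b. b \<le> x \<and> blocks b} \<union> {0}"
  define lo where "lo = Max Lset"
  have fL: "finite Lset" unfolding Lset_def by (rule finite_UnI) (rule finite_subset[of _ "{..x}"], auto)
  have loin: "lo \<in> Lset" unfolding lo_def using fL by (intro Max_in) (auto simp: Lset_def)
  have lox: "lo \<le> x" and lob: "lo = 0 \<or> blocks lo" using loin by (auto simp: Lset_def)
  have lomax: "\<And>b. b \<le> x \<Longrightarrow> blocks b \<Longrightarrow> b \<le> lo" unfolding lo_def using fL by (intro Max_ge) (auto simp: Lset_def)
  define Hset where "Hset = {b. x < b \<and> b \<le> Mb \<and> blocks b} \<union> {Mb}"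
  define hi where "hi = Min Hset"
  have fH: "finite Hset" unfolding Hset_def by (rule finite_UnI) (rule finite_subset[of _ "{..Mb}"], auto)
  have hiin: "hi \<in> Hset" unfolding hi_def using fH by (intro Min_in) (auto simp: Hset_def)
  have xhi: "x < hi" and hiM: "hi \<le> Mb" and hib: "hi = Mb \<or> blocks hi" using hiin xMb by (auto simp: Hset_def)
  have himin: "\<And>b. x < b \<Longrightarrow> b \<le> Mb \<Longrightarrow> blocks b \<Longrightarrow> hi \<le> b" unfolding hi_def using fH by (intro Min_le) (auto simp: Hset_def)
  have slo: "sig U V N lo = 0" using lob s0 F1[OF gN] by auto
  have shi: "sig U V N hi = 0"
  proof (cases "blocks hi")
    case True then show ?thesis using F1[OF gN] by simp
  next
    case False
    then have hM: "hi = Mb" using hib by simp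
    have e1: "{z\<in>N\<inter>V. hi \<le> z} = {}" and e2: "{z\<in>N\<inter>U. hi \<le> z} = {}" using Mb NUV hM by force+
    show ?thesis unfolding sig_def e1 e2 by simp
  qed
  have nbw: "nb lo (hi - 1)"
    unfolding nb_def
  proof (intro allI impI notI)
    fix b assume b: "lo < b \<and> b \<le> hi - 1" and bl: "blocks b"
    show False
    proof (cases "b \<le> x")
      case True then show False using lomax[OF True bl] b by simp
    next
      case False
      have bM: "b \<le> Mb" using b hiM xhi by linarith
      have "hi \<le> b" using himin[of b] False bl bM by simp
      then show False using b xhi by linarith
    qed
  qed
  define NUw where "NUw = {z\<in>N\<inter>U. lo \<le> z \<and> z < hi}"
  define NVw where "NVw = {z\<in>N\<inter>V. lo \<le> z \<and> z < hi}"
  have fw: "finite NUw" "finite NVw" using fN by (auto simp: NUw_def NVw_def)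
  have "sig U V N lo = sig U V N hi + int (card NVw) - int (card NUw)"
    unfolding NUw_def NVw_def using sig_split[OF fN, of lo hi] lox xhi by simp
  then have ceq: "card NVw = card NUw" using slo shi by simp
  have xw: "x \<in> NUw \<or> x \<in> NVw" using xN NUV lox xhi by (auto simp: NUw_def NVw_def)
  have ne: "NUw \<noteq> {} \<and> NVw \<noteq> {}"
  proof -
    have "card NUw \<noteq> 0 \<or> card NVw \<noteq> 0" using xw fw by auto
    then have "card NUw \<noteq> 0 \<and> card NVw \<noteq> 0" using ceq by simp
    then show ?thesis by auto
  qed
  then obtain u v where u: "u \<in> NUw" and v: "v \<in> NVw" by blast
  have uU: "u \<in> U" "u \<in> N" "lo \<le> u" "u < hi" using u by (auto simp: NUw_def)
  have vV: "v \<in> V" "v \<in> N" "lo \<le> v" "v < hi" using v by (auto simp: NVw_def)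
  have uV: "u \<notin> V" using uU Ns by (auto simp: singles_def)
  have vU: "v \<notin> U" using vV Ns by (auto simp: singles_def)
  have wU: "z = u" if z: "z \<in> U" "lo \<le> z" "z < hi" for z
  proof -
    have "z \<le> hi - 1" "u \<le> hi - 1" using z uU by linarith+
    then show ?thesis using uniqU[OF nbw z(1) uU(1) z(2) _ uU(3)] by blast
  qed
  have wV: "z = v" if z: "z \<in> V" "lo \<le> z" "z < hi" for z
  proof -
    have "z \<le> hi - 1" "v \<le> hi - 1" using z vV by linarith+
    then show ?thesis using uniqV[OF nbw z(1) vV(1) z(2) _ vV(3)] by blast
  qed
  have xP: "x \<in> {u,v}"
  proof -
    have "x \<in> NUw \<Longrightarrow> x = u" using wU unfolding NUw_def by blast
    moreover have "x \<in> NVw \<Longrightarrow> x = v" using wV unfolding NVw_def by blast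
    ultimately show ?thesis using xw by blast
  qed
  have PN: "{u,v} \<subseteq> N" using uU vV by simp
  have cp: "cpair {u,v}"
    unfolding cpair_def
  proof (intro exI conjI)
    show "\<forall>z\<in>U \<union> V. \<not> (min u v < z \<and> z < max u v)"
    proof (intro ballI notI)
      fix z assume z: "z \<in> U \<union> V" and zz: "min u v < z \<and> z < max u v"
      have zw: "lo \<le> z" "z < hi" using zz uU vV by (auto simp: min_def max_def split: if_splits)
      show False
      proof (cases "z \<in> U")
        case True then show False using wU[OF True zw] zz by (auto simp: min_def max_def split: if_splits)
      next
        case False then have "z \<in> V" using z by simp
        then show False using wV[OF _ zw] zz by (auto simp: min_def max_def split: if_splits)
      qed
    qed
  qed (use uU vV uV vU in auto)
  have sp: "\<And>t. sig U V {u,v} t = (if t \<le> v then 1 else 0) - (if t \<le> u then 1 else 0)"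
    using sig_pair[OF uU(1) uV vV(1) vU] .
  have sigP: "\<And>t. sig U V {u,v} t = 0 \<or> sig U V {u,v} t = sig U V N t"
  proof -
    fix t
    show "sig U V {u,v} t = 0 \<or> sig U V {u,v} t = sig U V N t"
    proof (cases "t \<le> lo")
      case True then show ?thesis using sp[of t] uU vV by simp
    next
      case F1: False
      show ?thesis
      proof (cases "hi \<le> t")
        case True then show ?thesis using sp[of t] uU vV by simp
      next
        case False
        have eV: "{z\<in>N\<inter>V. t \<le> z \<and> z < hi} = (if t \<le> v then {v} else {})"
        proof (intro set_eqI iffI)
          fix z assume "z \<in> {z\<in>N\<inter>V. t \<le> z \<and> z < hi}"
          then have z: "z \<in> V" "lo \<le> z" "z < hi" "t \<le> z" using F1 by auto
          have "z = v" using wV[OF z(1-3)] .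
          then show "z \<in> (if t \<le> v then {v} else {})" using z by simp
        next
          fix z assume "z \<in> (if t \<le> v then {v} else {})"
          then show "z \<in> {z\<in>N\<inter>V. t \<le> z \<and> z < hi}" using vV by (simp split: if_splits)
        qed
        have eU: "{z\<in>N\<inter>U. t \<le> z \<and> z < hi} = (if t \<le> u then {u} else {})"
        proof (intro set_eqI iffI)
          fix z assume "z \<in> {z\<in>N\<inter>U. t \<le> z \<and> z < hi}"
          then have z: "z \<in> U" "lo \<le> z" "z < hi" "t \<le> z" using F1 by auto
          have "z = u" using wU[OF z(1-3)] .
          then show "z \<in> (if t \<le> u then {u} else {})" using z by simp
        next
          fix z assume "z \<in> (if t \<le> u then {u} else {})"
          then show "z \<in> {z\<in>N\<inter>U. t \<le> z \<and> z < hi}" using uU by (simp split: if_splits)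
        qed
        have "sig U V N t = sig U V N hi + int (card {z\<in>N\<inter>V. t \<le> z \<and> z < hi}) - int (card {z\<in>N\<inter>U. t \<le> z \<and> z < hi})"
          using sig_split[OF fN, of t hi] False by simp
        then have "sig U V N t = sig U V {u,v} t" using shi eV eU sp[of t] by simp
        then show ?thesis by simp
      qed
    qed
  qed
  have gP: "good {u,v}"
    unfolding good_def
  proof (intro conjI allI)
    show "{u,v} \<subseteq> singles (U,V)" using PN Ns by blast
    show "sig U V {u,v} 0 = 0" using sp[of 0] by simp
    fix t show "vt (sig U V {u,v} t) t" using sigP[of t] vt0[of t] vN[of t] by auto
  qed
  show ?thesis using cp gP xP PN unfolding Psi0_def by blast
qed

lemma finite_Psi0: "finite Psi0"
proof -
  have "Psi0 \<subseteq> Pow (U \<union> V)" unfolding Psi0_def cpair_def by auto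
  then show ?thesis using fU fV finite_subset by blast
qed

lemma Psi0_good: "P \<in> Psi0 \<Longrightarrow> good P" unfolding Psi0_def by simp

lemma sig_Union:
  assumes S: "S \<subseteq> Psi0"
  shows "sig U V (\<Union>S) t = (\<Sum>P\<in>S. sig U V P t)"
proof -
  have fS: "finite S" using S finite_Psi0 finite_subset by blast
  have fP: "\<And>P. P \<in> S \<Longrightarrow> finite P"
  proof -
    fix P assume "P \<in> S"
    then have "P \<subseteq> U \<union> V" using S unfolding Psi0_def cpair_def by auto
    then show "finite P" using fU fV finite_subset by blast
  qed
  have cU: "\<And>W. card {z\<in>(\<Union>S)\<inter>W. t \<le> z} = (\<Sum>P\<in>S. card {z\<in>P\<inter>W. t \<le> z})"
  proof -
    fix W
    have e: "{z\<in>(\<Union>S)\<inter>W. t \<le> z} = (\<Union>P\<in>S. {z\<in>P\<inter>W. t \<le> z})" by auto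
    have "card (\<Union>P\<in>S. {z\<in>P\<inter>W. t \<le> z}) = (\<Sum>P\<in>S. card {z\<in>P\<inter>W. t \<le> z})"
    proof (rule card_UN_disjoint[OF fS])
      show "\<forall>i\<in>S. finite {z \<in> i \<inter> W. t \<le> z}" using fP by auto
      show "\<forall>i\<in>S. \<forall>j\<in>S. i \<noteq> j \<longrightarrow> {z \<in> i \<inter> W. t \<le> z} \<inter> {z \<in> j \<inter> W. t \<le> z} = {}"
        using Psi0_disj S by blast
    qed
    then show "card {z\<in>(\<Union>S)\<inter>W. t \<le> z} = (\<Sum>P\<in>S. card {z\<in>P\<inter>W. t \<le> z})" using e by simp
  qed
  show ?thesis unfolding sig_def cU by (simp add: sum_subtractf)
qed

lemma union_good:
  assumes S: "S \<subseteq> Psi0"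
  shows "good (\<Union>S)"
  unfolding good_def
proof (intro conjI allI)
  have fS: "finite S" using S finite_Psi0 finite_subset by blast
  show "\<Union>S \<subseteq> singles (U,V)" using S Psi0_good unfolding good_def by blast
  show "sig U V (\<Union>S) 0 = 0" unfolding sig_Union[OF S]
    using S Psi0_good unfolding good_def by (intro sum.neutral) blast
  fix t
  show "vt (sig U V (\<Union>S) t) t"
  proof (cases "\<exists>P\<in>S. sig U V P t \<noteq> 0")
    case True
    then obtain P where P: "P \<in> S" "sig U V P t \<noteq> 0" by blast
    have z: "\<And>Q. Q \<in> S - {P} \<Longrightarrow> sig U V Q t = 0"
      using Psi0_sig P S by blast
    have "(\<Sum>Q\<in>S. sig U V Q t) = sig U V P t + (\<Sum>Q\<in>S-{P}. sig U V Q t)"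
      using sum.remove[OF fS P(1)] by simp
    also have "(\<Sum>Q\<in>S-{P}. sig U V Q t) = 0" using z by (intro sum.neutral) blast
    finally have "sig U V (\<Union>S) t = sig U V P t" unfolding sig_Union[OF S] by simp
    then show ?thesis using Psi0_good[of P] P S unfolding good_def by auto
  next
    case False
    then have "sig U V (\<Union>S) t = 0" unfolding sig_Union[OF S] by (intro sum.neutral) blast
    then show ?thesis using vt0 by simp
  qed
qed

theorem main:
  "\<exists>Q. (\<forall>P\<in>Q. cpair P) \<and> pairwise disjnt Q \<and> {N. good N} = {\<Union>S | S. S \<subseteq> Q}"
proof (intro exI conjI)
  show "\<forall>P\<in>Psi0. cpair P" unfolding Psi0_def by simp
  show "pairwise disjnt Psi0" unfolding pairwise_def disjnt_def using Psi0_disj by blast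
  show "{N. good N} = {\<Union>S | S. S \<subseteq> Psi0}"
  proof (intro set_eqI iffI)
    fix N assume "N \<in> {N. good N}"
    then have g: "good N" by simp
    have "N = \<Union>{P\<in>Psi0. P \<subseteq> N}" using cover[OF g] by blast
    then show "N \<in> {\<Union>S | S. S \<subseteq> Psi0}" by blast
  next
    fix N assume "N \<in> {\<Union>S | S. S \<subseteq> Psi0}"
    then obtain S where "S \<subseteq> Psi0" "N = \<Union>S" by blast
    then show "N \<in> {N. good N}" using union_good by simp
  qed
qed

end



lemma cnt_step: "finite X \<Longrightarrow> cnt X (Suc t) \<le> cnt X t \<and> cnt X t \<le> cnt X (Suc t) + 1"
  using cnt_Suc[of X t] by (simp split: if_splits)

lemma cpair_consec:
  assumes fU: "finite U" and fV: "finite V"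
    and bal: "\<forall>t. cnt V t \<le> cnt U t \<and> cnt U t \<le> cnt V t + 1"
    and x: "x \<in> U" "x \<notin> V" and y: "y \<in> V" "y \<notin> U"
    and btw: "\<forall>z\<in>U\<union>V. \<not> (min x y < z \<and> z < max x y)"
  shows "consec_pair (U,V) {x,y}"
proof -
  define k where "k = cnt U x"
  define l where "l = cnt V y"
  have K: "1 \<le> k" "k \<le> card U" "nth_dec U k = x" using nth_dec_cnt[OF fU x(1)] k_def by auto
  have L: "1 \<le> l" "l \<le> card V" "nth_dec V l = y" using nth_dec_cnt[OF fV y(1)] l_def by auto
  have xy: "x \<noteq> y" using x y by auto
  have kl: "l = k \<or> l + 1 = k"
  proof (cases "y < x")
    case True
    have e1: "{z\<in>U. y \<le> z \<and> z < x} = {}"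
    proof -
      have "z \<notin> U" if "y \<le> z" "z < x" for z
      proof
        assume "z \<in> U"
        then have "z \<noteq> y" using y by auto
        then show False using btw \<open>z \<in> U\<close> that True by (auto simp: min_def max_def)
      qed
      then show ?thesis by blast
    qed
    have e2: "{z\<in>V. y \<le> z \<and> z < x} = {y}"
    proof -
      have "z = y" if "z \<in> V" "y \<le> z" "z < x" for z
      proof (rule ccontr)
        assume "z \<noteq> y"
        then have "min x y < z \<and> z < max x y" using that True by (simp add: min_def max_def)
        then show False using btw that(1) by blast
      qed
      then show ?thesis using y True by auto
    qed
    have a: "cnt U y = cnt U x" using cnt_split[OF fU, of y x] True e1 by simp
    have b: "cnt V y = cnt V x + 1" using cnt_split[OF fV, of y x] True e2 by simp
    have "cnt V y \<le> cnt U y" "cnt U x \<le> cnt V x + 1" using bal by auto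
    then show ?thesis using a b k_def l_def by simp
  next
    case False
    then have yx: "x < y" using xy by simp
    have e1: "{z\<in>V. x \<le> z \<and> z < y} = {}"
    proof -
      have "z \<notin> V" if "x \<le> z" "z < y" for z
      proof
        assume "z \<in> V"
        then have "z \<noteq> x" using x by auto
        then show False using btw \<open>z \<in> V\<close> that yx by (auto simp: min_def max_def)
      qed
      then show ?thesis by blast
    qed
    have e2: "{z\<in>U. x \<le> z \<and> z < y} = {x}"
    proof -
      have "z = x" if "z \<in> U" "x \<le> z" "z < y" for z
      proof (rule ccontr)
        assume "z \<noteq> x"
        then have "min x y < z \<and> z < max x y" using that yx by (simp add: min_def max_def)
        then show False using btw that(1) by blast
      qed
      then show ?thesis using x yx by auto
    qed
    have a: "cnt V x = cnt V y" using cnt_split[OF fV, of x y] yx e1 by simp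
    have b: "cnt U x = cnt U y + 1" using cnt_split[OF fU, of x y] yx e2 by simp
    have "cnt V y \<le> cnt U y" "cnt U x \<le> cnt V x + 1" using bal by auto
    then show ?thesis using a b k_def l_def by simp
  qed
  have sub: "{x,y} \<subseteq> singles (U,V)" using x y by (auto simp: singles_def)
  show ?thesis unfolding consec_pair_def using K L kl sub by (intro exI[of _ k] exI[of _ l]) auto
qed

definition gi1 :: "nat \<Rightarrow> nat \<Rightarrow> nat set \<Rightarrow> nat \<Rightarrow> int" where
  "gi1 m m' B t = (if m' = m then int (cnt B t) else int (cnt B (t - 1)))"
definition gi2 :: "nat \<Rightarrow> nat \<Rightarrow> nat set \<Rightarrow> nat \<Rightarrow> int" where
  "gi2 m m' A t = (if m' = m then int (cnt A t) - 1 else int (cnt A (t - 1)) - 1)"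
definition gii1 :: "nat \<Rightarrow> nat \<Rightarrow> nat set \<Rightarrow> nat \<Rightarrow> int" where
  "gii1 m m' D t = (if m' = m then int (cnt D (t - 1)) else int (cnt D t))"
definition gii2 :: "nat \<Rightarrow> nat \<Rightarrow> nat set \<Rightarrow> nat \<Rightarrow> int" where
  "gii2 m m' C t = (if m' = m then int (cnt C (t - 1)) - 1 else int (cnt C t) - 1)"

lemma gmono_plain: "finite X \<Longrightarrow> int (cnt X (Suc t)) + c \<le> int (cnt X t) + c \<and> int (cnt X t) + c \<le> int (cnt X (Suc t)) + c + 1"
  using cnt_step[of X t] by linarith

lemma gmono_shift: "finite X \<Longrightarrow> int (cnt X (Suc t - 1)) + c \<le> int (cnt X (t - 1)) + c \<and> int (cnt X (t - 1)) + c \<le> int (cnt X (Suc t - 1)) + c + 1"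
proof (cases t)
  case 0 then show ?thesis by simp
next
  case (Suc s)
  assume "finite X"
  then show ?thesis using cnt_step[of X s] Suc by simp
qed

lemma gi_mono: "finite X \<Longrightarrow>
    gi1 m m' X (Suc t) \<le> gi1 m m' X t \<and> gi1 m m' X t \<le> gi1 m m' X (Suc t) + 1"
  "finite X \<Longrightarrow> gi2 m m' X (Suc t) \<le> gi2 m m' X t \<and> gi2 m m' X t \<le> gi2 m m' X (Suc t) + 1"
  "finite X \<Longrightarrow> gii1 m m' X (Suc t) \<le> gii1 m m' X t \<and> gii1 m m' X t \<le> gii1 m m' X (Suc t) + 1"
  "finite X \<Longrightarrow> gii2 m m' X (Suc t) \<le> gii2 m m' X t \<and> gii2 m m' X t \<le> gii2 m m' X (Suc t) + 1"
  using gmono_plain[of X t 0] gmono_shift[of X t 0] gmono_plain[of X t "-1"] gmono_shift[of X t "-1"]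
  by (auto simp: gi1_def gi2_def gii1_def gii2_def)

lemma EQi:
  assumes mm: "m' = m \<or> m' = m + 1" and fC: "finite C'" and fD: "finite D'"
  shows "KK m m' A B C' D' \<longleftrightarrow> (\<forall>t. gi1 m m' B t \<le> int (cnt C' t) \<and> int (cnt C' t) \<le> gi1 m m' B (Suc t) + 1 \<and>
            gi2 m m' A t \<le> int (cnt D' t) \<and> int (cnt D' t) \<le> gi2 m m' A (Suc t) + 1)"
proof (cases "m' = m")
  case True
  have KK: "KK m m' A B C' D' \<longleftrightarrow> (\<forall>t. cnt D' t \<le> cnt A (Suc t) \<and> cnt A t \<le> cnt D' t + 1 \<and>
                     cnt C' t \<le> cnt B (Suc t) + 1 \<and> cnt B t \<le> cnt C' t)" unfolding KK_def using True by simp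
  have G: "\<And>t. gi1 m m' B t = int (cnt B t)" "\<And>t. gi2 m m' A t = int (cnt A t) - 1"
    using True by (auto simp: gi1_def gi2_def)
  show ?thesis unfolding KK G
  proof (intro iffI allI)
    fix t assume H: "\<forall>t. cnt D' t \<le> cnt A (Suc t) \<and> cnt A t \<le> cnt D' t + 1 \<and> cnt C' t \<le> cnt B (Suc t) + 1 \<and> cnt B t \<le> cnt C' t"
    show "int (cnt B t) \<le> int (cnt C' t) \<and> int (cnt C' t) \<le> int (cnt B (Suc t)) + 1 \<and>
          int (cnt A t) - 1 \<le> int (cnt D' t) \<and> int (cnt D' t) \<le> int (cnt A (Suc t)) - 1 + 1"
      using H[rule_format, of t] by linarith
  next
    fix t assume H: "\<forall>t. int (cnt B t) \<le> int (cnt C' t) \<and> int (cnt C' t) \<le> int (cnt B (Suc t)) + 1 \<and>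
          int (cnt A t) - 1 \<le> int (cnt D' t) \<and> int (cnt D' t) \<le> int (cnt A (Suc t)) - 1 + 1"
    show "cnt D' t \<le> cnt A (Suc t) \<and> cnt A t \<le> cnt D' t + 1 \<and> cnt C' t \<le> cnt B (Suc t) + 1 \<and> cnt B t \<le> cnt C' t"
      using H[rule_format, of t] by linarith
  qed
next
  case False
  then have T: "m' = m + 1" using mm by simp
  have KK: "KK m m' A B C' D' \<longleftrightarrow> (\<forall>t. cnt D' t \<le> cnt A t \<and> cnt A t \<le> cnt D' (Suc t) + 1 \<and>
                     cnt C' t \<le> cnt B t + 1 \<and> cnt B t \<le> cnt C' (Suc t))" unfolding KK_def using T by simp
  have G: "\<And>t. gi1 m m' B t = int (cnt B (t - 1))" "\<And>t. gi2 m m' A t = int (cnt A (t - 1)) - 1"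
    using False by (auto simp: gi1_def gi2_def)
  show ?thesis unfolding KK G
  proof (intro iffI allI)
    fix t assume H: "\<forall>t. cnt D' t \<le> cnt A t \<and> cnt A t \<le> cnt D' (Suc t) + 1 \<and> cnt C' t \<le> cnt B t + 1 \<and> cnt B t \<le> cnt C' (Suc t)"
    show "int (cnt B (t - 1)) \<le> int (cnt C' t) \<and> int (cnt C' t) \<le> int (cnt B (Suc t - 1)) + 1 \<and>
          int (cnt A (t - 1)) - 1 \<le> int (cnt D' t) \<and> int (cnt D' t) \<le> int (cnt A (Suc t - 1)) - 1 + 1"
    proof (cases t)
      case 0
      then show ?thesis using H[rule_format, of 0] cnt_step[OF fC, of 0] cnt_step[OF fD, of 0] by simp
    next
      case (Suc s)
      then show ?thesis using H[rule_format, of s] H[rule_format, of t] by simp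
    qed
  next
    fix t assume H: "\<forall>t. int (cnt B (t - 1)) \<le> int (cnt C' t) \<and> int (cnt C' t) \<le> int (cnt B (Suc t - 1)) + 1 \<and>
          int (cnt A (t - 1)) - 1 \<le> int (cnt D' t) \<and> int (cnt D' t) \<le> int (cnt A (Suc t - 1)) - 1 + 1"
    show "cnt D' t \<le> cnt A t \<and> cnt A t \<le> cnt D' (Suc t) + 1 \<and> cnt C' t \<le> cnt B t + 1 \<and> cnt B t \<le> cnt C' (Suc t)"
      using H[rule_format, of t] H[rule_format, of "Suc t"] by simp
  qed
qed

lemma EQii:
  assumes mm: "m' = m \<or> m' = m + 1" and fA: "finite A'" and fB: "finite B'"
  shows "KK m m' A' B' C D \<longleftrightarrow> (\<forall>t. gii1 m m' D t \<le> int (cnt A' t) \<and> int (cnt A' t) \<le> gii1 m m' D (Suc t) + 1 \<and>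
            gii2 m m' C t \<le> int (cnt B' t) \<and> int (cnt B' t) \<le> gii2 m m' C (Suc t) + 1)"
proof (cases "m' = m")
  case True
  have KK: "KK m m' A' B' C D \<longleftrightarrow> (\<forall>t. cnt D t \<le> cnt A' (Suc t) \<and> cnt A' t \<le> cnt D t + 1 \<and>
                     cnt C t \<le> cnt B' (Suc t) + 1 \<and> cnt B' t \<le> cnt C t)" unfolding KK_def using True by simp
  have G: "\<And>t. gii1 m m' D t = int (cnt D (t - 1))" "\<And>t. gii2 m m' C t = int (cnt C (t - 1)) - 1"
    using True by (auto simp: gii1_def gii2_def)
  show ?thesis unfolding KK G
  proof (intro iffI allI)
    fix t assume H: "\<forall>t. cnt D t \<le> cnt A' (Suc t) \<and> cnt A' t \<le> cnt D t + 1 \<and> cnt C t \<le> cnt B' (Suc t) + 1 \<and> cnt B' t \<le> cnt C t"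
    show "int (cnt D (t - 1)) \<le> int (cnt A' t) \<and> int (cnt A' t) \<le> int (cnt D (Suc t - 1)) + 1 \<and>
          int (cnt C (t - 1)) - 1 \<le> int (cnt B' t) \<and> int (cnt B' t) \<le> int (cnt C (Suc t - 1)) - 1 + 1"
    proof (cases t)
      case 0
      then show ?thesis using H[rule_format, of 0] cnt_step[OF fA, of 0] cnt_step[OF fB, of 0] by simp
    next
      case (Suc s)
      then show ?thesis using H[rule_format, of s] H[rule_format, of t] by simp
    qed
  next
    fix t assume H: "\<forall>t. int (cnt D (t - 1)) \<le> int (cnt A' t) \<and> int (cnt A' t) \<le> int (cnt D (Suc t - 1)) + 1 \<and>
          int (cnt C (t - 1)) - 1 \<le> int (cnt B' t) \<and> int (cnt B' t) \<le> int (cnt C (Suc t - 1)) - 1 + 1"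
    show "cnt D t \<le> cnt A' (Suc t) \<and> cnt A' t \<le> cnt D t + 1 \<and> cnt C t \<le> cnt B' (Suc t) + 1 \<and> cnt B' t \<le> cnt C t"
      using H[rule_format, of t] H[rule_format, of "Suc t"] by simp
  qed
next
  case False
  then have T: "m' = m + 1" using mm by simp
  have KK: "KK m m' A' B' C D \<longleftrightarrow> (\<forall>t. cnt D t \<le> cnt A' t \<and> cnt A' t \<le> cnt D (Suc t) + 1 \<and>
                     cnt C t \<le> cnt B' t + 1 \<and> cnt B' t \<le> cnt C (Suc t))" unfolding KK_def using T by simp
  have G: "\<And>t. gii1 m m' D t = int (cnt D t)" "\<And>t. gii2 m m' C t = int (cnt C t) - 1"
    using False by (auto simp: gii1_def gii2_def)
  show ?thesis unfolding KK G
  proof (intro iffI allI)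
    fix t assume H: "\<forall>t. cnt D t \<le> cnt A' t \<and> cnt A' t \<le> cnt D (Suc t) + 1 \<and> cnt C t \<le> cnt B' t + 1 \<and> cnt B' t \<le> cnt C (Suc t)"
    show "int (cnt D t) \<le> int (cnt A' t) \<and> int (cnt A' t) \<le> int (cnt D (Suc t)) + 1 \<and>
          int (cnt C t) - 1 \<le> int (cnt B' t) \<and> int (cnt B' t) \<le> int (cnt C (Suc t)) - 1 + 1"
      using H[rule_format, of t] by linarith
  next
    fix t assume H: "\<forall>t. int (cnt D t) \<le> int (cnt A' t) \<and> int (cnt A' t) \<le> int (cnt D (Suc t)) + 1 \<and>
          int (cnt C t) - 1 \<le> int (cnt B' t) \<and> int (cnt B' t) \<le> int (cnt C (Suc t)) - 1 + 1"
    show "cnt D t \<le> cnt A' t \<and> cnt A' t \<le> cnt D (Suc t) + 1 \<and> cnt C t \<le> cnt B' t + 1 \<and> cnt B' t \<le> cnt C (Suc t)"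
      using H[rule_format, of t] by linarith
  qed
qed



theorem proposition0307:
  fixes Z Z' :: symbol and m m' :: nat
  assumes "special1 m Z"
    and "special0 m' Z'"
    and "m' = m \<or> m' = m + 1"
    and "DZZ Z Z' \<noteq> {}"
  shows "(\<exists>\<Psi>0'. (\<forall>P\<in>\<Psi>0'. consec_pair Z' P) \<and> pairwise disjnt \<Psi>0' \<and>
            {L'. (Z, L') \<in> DZZ Z Z'} = {move Z' (\<Union>\<Psi>') | \<Psi>'. \<Psi>' \<subseteq> \<Psi>0'})
       \<and> (\<exists>\<Psi>0. (\<forall>P\<in>\<Psi>0. consec_pair Z P) \<and> pairwise disjnt \<Psi>0 \<and>
            {L. (L, Z') \<in> DZZ Z Z'} = {move Z (\<Union>\<Psi>) | \<Psi>. \<Psi> \<subseteq> \<Psi>0})"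
proof -
  obtain A B where Z: "Z = (A,B)" by fastforce
  obtain C D where Z': "Z' = (C,D)" by fastforce
  have s1: "special1 m (A,B)" using assms(1) Z by simp
  have s0: "special0 m' (C,D)" using assms(2) Z' by simp
  have mm: "m' = m \<or> m' = m + 1" using assms(3) .
  have ne: "DZZ (A,B) (C,D) \<noteq> {}" using assms(4) Z Z' by simp
  have fA: "finite A" and fB: "finite B" using s1 by (auto simp: special1_def is_symbol_def)
  have fC: "finite C" and fD: "finite D" using s0 by (auto simp: special0_def is_symbol_def)
  have bZ: "\<forall>t. cnt B t \<le> cnt A t \<and> cnt A t \<le> cnt B t + 1" using bal1[OF s1] .
  have bZ': "\<forall>t. cnt D t \<le> cnt C t \<and> cnt C t \<le> cnt D t + 1" using bal0[OF s0] .
  have K0: "KK m m' A B C D"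
    using base[OF s1 s0 mm ne] DZZ_char[OF s1 s0 mm, of "(A,B)" "(C,D)"] by auto
  have W1: "win C D (gi1 m m' B) (gi2 m m' A)"
  proof (unfold_locales)
    fix t
    show "cnt D t \<le> cnt C t" "cnt C t \<le> cnt D t + 1" using bZ' by auto
    show "gi1 m m' B (Suc t) \<le> gi1 m m' B t \<and> gi1 m m' B t \<le> gi1 m m' B (Suc t) + 1" using gi_mono(1)[OF fB] .
    show "gi2 m m' A (Suc t) \<le> gi2 m m' A t \<and> gi2 m m' A t \<le> gi2 m m' A (Suc t) + 1" using gi_mono(2)[OF fA] .
    show "gi1 m m' B t \<le> int (cnt C t) \<and> int (cnt C t) \<le> gi1 m m' B (Suc t) + 1 \<and>
          gi2 m m' A t \<le> int (cnt D t) \<and> int (cnt D t) \<le> gi2 m m' A (Suc t) + 1"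
      using EQi[OF mm fC fD, of A B] K0 by blast
  qed (use fC fD in auto)
  have good1: "win.good C D (gi1 m m' B) (gi2 m m' A) N \<longleftrightarrow>
     N \<subseteq> singles (C,D) \<and> sig C D N 0 = 0 \<and> KK m m' A B (fst (move (C,D) N)) (snd (move (C,D) N))" for N
  proof -
    have fm: "finite (fst (move (C,D) N))" "finite (snd (move (C,D) N))" using finite_move[OF fC fD] by auto
    have "(\<forall>t. win.vt C D (gi1 m m' B) (gi2 m m' A) (sig C D N t) t) \<longleftrightarrow> KK m m' A B (fst (move (C,D) N)) (snd (move (C,D) N))"
      unfolding EQi[OF mm fm] win.vt_def[OF W1] cnt_move[OF fC fD] by (simp add: algebra_simps)
    then show ?thesis unfolding win.good_def[OF W1] by blast
  qed
  obtain Q1 where Qc: "(\<forall>P\<in>Q1. win.cpair C D P) \<and> pairwise disjnt Q1 \<and>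
     {N. win.good C D (gi1 m m' B) (gi2 m m' A) N} = {\<Union>S | S. S \<subseteq> Q1}"
    using win.main[OF W1] by (erule exE)
  note Q1 = conjunct1[OF Qc] conjunct1[OF conjunct2[OF Qc]] conjunct2[OF conjunct2[OF Qc]]
  have part1: "\<exists>\<Psi>0'. (\<forall>P\<in>\<Psi>0'. consec_pair Z' P) \<and> pairwise disjnt \<Psi>0' \<and>
            {L'. (Z, L') \<in> DZZ Z Z'} = {move Z' (\<Union>\<Psi>') | \<Psi>'. \<Psi>' \<subseteq> \<Psi>0'}"
  proof (intro exI conjI)
    show "\<forall>P\<in>Q1. consec_pair Z' P"
    proof
      fix P assume "P \<in> Q1"
      then have "win.cpair C D P" using Q1(1) by blast
      then obtain x y where "P = {x,y}" "x \<in> C" "x \<notin> D" "y \<in> D" "y \<notin> C"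
        "\<forall>z\<in>C\<union>D. \<not> (min x y < z \<and> z < max x y)" unfolding win.cpair_def[OF W1] by blast
      then show "consec_pair Z' P" using cpair_consec[OF fC fD bZ'] Z' by simp
    qed
    show "pairwise disjnt Q1" using Q1(2) .
    have E: "{L'. (Z, L') \<in> DZZ Z Z'} = (\<lambda>N. move (C,D) N) ` {N. win.good C D (gi1 m m' B) (gi2 m m' A) N}"
    proof (intro set_eqI iffI)
      fix L' assume "L' \<in> {L'. (Z, L') \<in> DZZ Z Z'}"
      then have "((A,B), L') \<in> DZZ (A,B) (C,D)" using Z Z' by simp
      then obtain M N where MN: "N \<subseteq> singles (C,D)" "L' = move (C,D) N" "sig C D N 0 = 0"
         "KK m m' A B (fst L') (snd L')"
        using DZZ_char[OF s1 s0 mm] by fastforce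
      then have "win.good C D (gi1 m m' B) (gi2 m m' A) N" using good1 by simp
      then show "L' \<in> (\<lambda>N. move (C,D) N) ` {N. win.good C D (gi1 m m' B) (gi2 m m' A) N}" using MN by blast
    next
      fix L' assume "L' \<in> (\<lambda>N. move (C,D) N) ` {N. win.good C D (gi1 m m' B) (gi2 m m' A) N}"
      then obtain N where N: "win.good C D (gi1 m m' B) (gi2 m m' A) N" "L' = move (C,D) N" by blast
      then have NN: "N \<subseteq> singles (C,D)" "sig C D N 0 = 0" "KK m m' A B (fst L') (snd L')" using good1 by auto
      have "((A,B), L') \<in> DZZ (A,B) (C,D)"
        using DZZ_char[OF s1 s0 mm, of "(A,B)" L'] NN N(2) by (metis empty_subsetI fst_conv move_empty sig_empty snd_conv)
      then show "L' \<in> {L'. (Z, L') \<in> DZZ Z Z'}" using Z Z' by simp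
    qed
    show "{L'. (Z, L') \<in> DZZ Z Z'} = {move Z' (\<Union>\<Psi>') | \<Psi>'. \<Psi>' \<subseteq> Q1}"
      unfolding E Q1(3) using Z' by blast
  qed
  have W2: "win A B (gii1 m m' D) (gii2 m m' C)"
  proof (unfold_locales)
    fix t
    show "cnt B t \<le> cnt A t" "cnt A t \<le> cnt B t + 1" using bZ by auto
    show "gii1 m m' D (Suc t) \<le> gii1 m m' D t \<and> gii1 m m' D t \<le> gii1 m m' D (Suc t) + 1" using gi_mono(3)[OF fD] .
    show "gii2 m m' C (Suc t) \<le> gii2 m m' C t \<and> gii2 m m' C t \<le> gii2 m m' C (Suc t) + 1" using gi_mono(4)[OF fC] .
    show "gii1 m m' D t \<le> int (cnt A t) \<and> int (cnt A t) \<le> gii1 m m' D (Suc t) + 1 \<and>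
          gii2 m m' C t \<le> int (cnt B t) \<and> int (cnt B t) \<le> gii2 m m' C (Suc t) + 1"
      using EQii[OF mm fA fB, of C D] K0 by blast
  qed (use fA fB in auto)
  have good2: "win.good A B (gii1 m m' D) (gii2 m m' C) M \<longleftrightarrow>
     M \<subseteq> singles (A,B) \<and> sig A B M 0 = 0 \<and> KK m m' (fst (move (A,B) M)) (snd (move (A,B) M)) C D" for M
  proof -
    have fm: "finite (fst (move (A,B) M))" "finite (snd (move (A,B) M))" using finite_move[OF fA fB] by auto
    have "(\<forall>t. win.vt A B (gii1 m m' D) (gii2 m m' C) (sig A B M t) t) \<longleftrightarrow> KK m m' (fst (move (A,B) M)) (snd (move (A,B) M)) C D"
      unfolding EQii[OF mm fm] win.vt_def[OF W2] cnt_move[OF fA fB] by (simp add: algebra_simps)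
    then show ?thesis unfolding win.good_def[OF W2] by blast
  qed
  obtain Q2 where Qc2: "(\<forall>P\<in>Q2. win.cpair A B P) \<and> pairwise disjnt Q2 \<and>
     {N. win.good A B (gii1 m m' D) (gii2 m m' C) N} = {\<Union>S | S. S \<subseteq> Q2}"
    using win.main[OF W2] by (erule exE)
  note Q2 = conjunct1[OF Qc2] conjunct1[OF conjunct2[OF Qc2]] conjunct2[OF conjunct2[OF Qc2]]
  have part2: "\<exists>\<Psi>0. (\<forall>P\<in>\<Psi>0. consec_pair Z P) \<and> pairwise disjnt \<Psi>0 \<and>
            {L. (L, Z') \<in> DZZ Z Z'} = {move Z (\<Union>\<Psi>) | \<Psi>. \<Psi> \<subseteq> \<Psi>0}"
  proof (intro exI conjI)
    show "\<forall>P\<in>Q2. consec_pair Z P"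
    proof
      fix P assume "P \<in> Q2"
      then have "win.cpair A B P" using Q2(1) by blast
      then obtain x y where "P = {x,y}" "x \<in> A" "x \<notin> B" "y \<in> B" "y \<notin> A"
        "\<forall>z\<in>A\<union>B. \<not> (min x y < z \<and> z < max x y)" unfolding win.cpair_def[OF W2] by blast
      then show "consec_pair Z P" using cpair_consec[OF fA fB bZ] Z by simp
    qed
    show "pairwise disjnt Q2" using Q2(2) .
    have E: "{L. (L, Z') \<in> DZZ Z Z'} = (\<lambda>M. move (A,B) M) ` {M. win.good A B (gii1 m m' D) (gii2 m m' C) M}"
    proof (intro set_eqI iffI)
      fix L assume "L \<in> {L. (L, Z') \<in> DZZ Z Z'}"
      then have "(L, (C,D)) \<in> DZZ (A,B) (C,D)" using Z Z' by simp
      then obtain M N where MN: "M \<subseteq> singles (A,B)" "L = move (A,B) M" "sig A B M 0 = 0"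
         "KK m m' (fst L) (snd L) C D"
        using DZZ_char[OF s1 s0 mm] by fastforce
      then have "win.good A B (gii1 m m' D) (gii2 m m' C) M" using good2 by simp
      then show "L \<in> (\<lambda>M. move (A,B) M) ` {M. win.good A B (gii1 m m' D) (gii2 m m' C) M}" using MN by blast
    next
      fix L assume "L \<in> (\<lambda>M. move (A,B) M) ` {M. win.good A B (gii1 m m' D) (gii2 m m' C) M}"
      then obtain M where M: "win.good A B (gii1 m m' D) (gii2 m m' C) M" "L = move (A,B) M" by blast
      then have MM: "M \<subseteq> singles (A,B)" "sig A B M 0 = 0" "KK m m' (fst L) (snd L) C D" using good2 by auto
      have "(L, (C,D)) \<in> DZZ (A,B) (C,D)"
        using DZZ_char[OF s1 s0 mm, of L "(C,D)"] MM M(2) by (metis empty_subsetI fst_conv move_empty sig_empty snd_conv)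
      then show "L \<in> {L. (L, Z') \<in> DZZ Z Z'}" using Z Z' by simp
    qed
    show "{L. (L, Z') \<in> DZZ Z Z'} = {move Z (\<Union>\<Psi>) | \<Psi>. \<Psi> \<subseteq> Q2}"
      unfolding E Q2(3) using Z by blast
  qed
  show ?thesis using part1 part2 by blast
qed


end
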